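(* In the setting of the FedSLoP algorithm (see context), under Assumptions A1 and A2, suppose $$\eta\le\min\Big\{\sqrt{\tfrac{1-\mu^2}{6L^2\tau^3}},\ \tfrac{1}{LS_\tau}\Big\}.$$ Then for every round $t$, $$\mathbb{E}_t[f(\theta^{t+1})]\le f(\theta^t)-\Big(\frac{\underline{\delta}}{2}\eta S_\tau-\frac{12L^2\tau^4\eta^3}{(1-\mu)(1-\mu^2)}\Big)\|\nabla f(\theta^t)\|^2+\frac{\eta^2S_\tau^2L\sigma_L^2}{N}+\frac{12L^2\tau^4\eta^3}{\underline{\delta}(1-\mu)(1-\mu^2)}(\sigma_L^2+\sigma_G^2).$$
   Context: Setting. Let $d,N,\tau$ be positive integers, $r$ an integer with $1\le r\le d$, $\underline{\delta}:=r/d\in(0,1]$, $\mu\in[0,1)$, $\eta>0$, $L>0$. Let $F_1,\dots,F_N:\mathbb{R}^d\to\mathbb{R}$ be differentiable and $f(\theta):=\frac1N\sum_{i=1}^N F_i(\theta)$. Assumption A1: $f$ is bounded below by $f_*>-\infty$, and $f$ and every $F_i$ are $L$-smooth (gradients $L$-Lipschitz). Assumption A2: each stochastic gradient $g_{i,s}=\nabla F_i(\theta_{i,s};\xi_{i,s})$ computed by the algorithm satisfies, conditionally on all randomness generated before it (including $\Pi_t$ and $\theta_{i,s}$), $\mathbb{E}[g_{i,s}]=\nabla F_i(\theta_{i,s})$ and $\mathbb{E}\|g_{i,s}-\nabla F_i(\theta_{i,s})\|^2\le\sigma_L^2$, the minibatch samples of different clients are conditionally independent; and $\|\nabla F_i(\theta)-\nabla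 f(\theta)\|^2\le\sigma_G^2$ for all $i$ and all $\theta\in\mathbb{R}^d$. Algorithm (FedSLoP, full participation). Start from $\theta^0\in\mathbb{R}^d$. In each round $t=0,1,\dots$: sample $P_t$ from the Haar (uniform, $O(d)$-invariant) distribution on $\mathrm{St}(d,r)=\{P\in\mathbb{R}^{d\times r}:P^\top P=I_r\}$, independently of all past randomness and of data sampling, and set $\Pi_t=P_tP_t^\top$. Each client $i=1,\dots,N$ sets $\theta_{i,0}=\theta^t$, $v_{i,0}=0$, and for $s=0,\dots,\tau-1$: $v_{i,s+1}=\mu v_{i,s}+\Pi_t g_{i,s}$, $\theta_{i,s+1}=\theta_{i,s}-\eta v_{i,s+1}$. The server sets $\theta^{t+1}=\theta^t+\frac1N\sum_{i=1}^N(\theta_{i,\tau}-\theta^t)$. Notation. $\mathbb{E}_t[\cdot]$ is the conditional expectation given $\theta^t$ and all randomness up to the start of round $t$ (so it averages over $\Pi_t$ and the round-$t$ minibatches). The momentum weights are $\alpha_{\tau,q}:=(1-\mu^{\tau-q})/(1-\mu)$ for $q=0,\dots,\tau-1$, and $S_\tau:=\sum_{q=0}^{\tau-1}\alpha_{\tau,q}$. *)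

theory Defs
  imports "HOL-Analysis.Analysis" "HOL-Probability.Probability"
begin

definition stiefel :: "(real^'r^'d) set" where
  "stiefel = {P. transpose P ** P = mat 1}"

definition haar_stiefel :: "(real^'r^'d) measure \<Rightarrow> bool" where
  "haar_stiefel Q \<longleftrightarrow> prob_space Q \<and> sets Q = sets borel \<and> stiefel \<in> sets Q \<and>
     emeasure Q stiefel = 1 \<and>
     (\<forall>U::real^'d^'d. orthogonal_matrix U \<longrightarrow> distr Q borel (\<lambda>P. U ** P) = Q)"

text \<open>Local FedSLoP client iteration with projection Pi, step eta, momentum mu, stochastic
  gradient sequence g (g s = g_{i,s}), start theta0.  Returns (theta_{i,s}, v_{i,s}).\<close>
fun local_iter :: "real \<Rightarrow> real \<Rightarrow> real^'d^'d \<Rightarrow> (nat \<Rightarrow> real^'d) \<Rightarrow> real^'d \<Rightarrow> nat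
    \<Rightarrow> (real^'d) \<times> (real^'d)" where
  "local_iter \<eta> \<mu> Proj g \<theta>0 0 = (\<theta>0, 0)"
| "local_iter \<eta> \<mu> Proj g \<theta>0 (Suc s) =
     (let v' = \<mu> *\<^sub>R snd (local_iter \<eta> \<mu> Proj g \<theta>0 s) + Proj *v g s
      in (fst (local_iter \<eta> \<mu> Proj g \<theta>0 s) - \<eta> *\<^sub>R v', v'))"

definition alpha_w :: "real \<Rightarrow> nat \<Rightarrow> nat \<Rightarrow> real" where
  "alpha_w \<mu> \<tau> q = (1 - \<mu> ^ (\<tau> - q)) / (1 - \<mu>)"

definition S_tau :: "real \<Rightarrow> nat \<Rightarrow> real" where
  "S_tau \<mu> \<tau> = (\<Sum>q<\<tau>. alpha_w \<mu> \<tau> q)"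

definition L_smooth :: "real \<Rightarrow> ('a::real_inner \<Rightarrow> real) \<Rightarrow> ('a \<Rightarrow> 'a) \<Rightarrow> bool" where
  "L_smooth L h gh \<longleftrightarrow> (\<forall>x. GDERIV h x :> gh x) \<and> (\<forall>x y. norm (gh x - gh y) \<le> L * norm (x - y))"

text \<open>Information available when g_{i,s} is computed: the projection P and all stochastic
  gradients of client i from earlier local steps, together with all stochastic gradients of
  the other clients.\<close>
definition info_sigma :: "'w measure \<Rightarrow> ('w \<Rightarrow> real^'r^'d) \<Rightarrow> (nat \<Rightarrow> nat \<Rightarrow> 'w \<Rightarrow> real^'d)
    \<Rightarrow> nat \<Rightarrow> nat \<Rightarrow> nat \<Rightarrow> nat \<Rightarrow> 'w measure" where
  "info_sigma M P g N \<tau> i s = sigma (space M)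
     ({P -` A \<inter> space M | A. A \<in> sets borel} \<union>
      {g j s' -` A \<inter> space M | j s' A. j < N \<and> s' < \<tau> \<and> (j \<noteq> i \<or> s' < s) \<and> A \<in> sets borel})"

end

theory Submission
  imports Defs
begin


lemma line_deriv:
  fixes h :: "'a::real_inner \<Rightarrow> real"
  assumes "\<And>y. GDERIV h y :> gh y"
  shows "((\<lambda>t. h (x + t *\<^sub>R u)) has_real_derivative (gh (x + t *\<^sub>R u) \<bullet> u)) (at t)"
proof -
  have h1: "(h has_derivative (\<lambda>v. v \<bullet> gh (x + t *\<^sub>R u))) (at (x + t *\<^sub>R u))"
    using assms unfolding gderiv_def by simp
  have h2: "((\<lambda>t. x + t *\<^sub>R u) has_derivative (\<lambda>s. s *\<^sub>R u)) (at t)"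
    using has_derivative_add[OF has_derivative_const[of x] has_derivative_scaleR_left[OF has_derivative_ident[of "at t"], of u]] by simp
  have "((\<lambda>t. h (x + t *\<^sub>R u)) has_derivative (\<lambda>s. (s *\<^sub>R u) \<bullet> gh (x + t *\<^sub>R u))) (at t)"
    using has_derivative_compose[OF h2 h1] by simp
  then show ?thesis
    unfolding has_field_derivative_def by (rule has_derivative_eq_rhs) (auto simp: inner_commute fun_eq_iff)
qed

lemma smooth_upper:
  fixes h :: "'a::real_inner \<Rightarrow> real"
  assumes "L_smooth L h gh"
  shows "h (x + u) \<le> h x + gh x \<bullet> u + L / 2 * (norm u)\<^sup>2"
proof -
  have der: "\<And>y. GDERIV h y :> gh y" and lip: "\<And>a b. norm (gh a - gh b) \<le> L * norm (a - b)"
    using assms unfolding L_smooth_def by auto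
  define \<phi> where "\<phi> t = h (x + t *\<^sub>R u) - t * (gh x \<bullet> u) - L / 2 * t^2 * (norm u)^2" for t
  define \<phi>' where "\<phi>' t = gh (x + t *\<^sub>R u) \<bullet> u - gh x \<bullet> u - L * t * (norm u)^2" for t
  have d: "(\<phi> has_real_derivative \<phi>' t) (at t)" for t
  proof -
    have a: "((\<lambda>t. h (x + t *\<^sub>R u)) has_real_derivative (gh (x + t *\<^sub>R u) \<bullet> u)) (at t)"
      by (rule line_deriv[OF der])
    have b: "((\<lambda>t. t * (gh x \<bullet> u)) has_real_derivative (gh x \<bullet> u)) (at t)"
      using DERIV_cmult_right[OF DERIV_ident, of "gh x \<bullet> u"] by simp
    have c: "((\<lambda>t. L / 2 * t^2 * (norm u)^2) has_real_derivative (L * t * (norm u)^2)) (at t)"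
      using DERIV_cmult[OF DERIV_cmult_right[OF DERIV_pow[of 2 t], of "(norm u)^2"], of "L/2"]
      by (simp add: mult.assoc)
    show ?thesis unfolding \<phi>_def \<phi>'_def using DERIV_diff[OF DERIV_diff[OF a b] c] by simp
  qed
  obtain z where z: "0 < z" "z < 1" "\<phi> 1 - \<phi> 0 = (1 - 0) * \<phi>' z"
    using MVT2[of 0 1 \<phi> \<phi>'] d by auto
  have "\<phi>' z = (gh (x + z *\<^sub>R u) - gh x) \<bullet> u - L * z * (norm u)^2"
    unfolding \<phi>'_def by (simp add: inner_diff_left)
  also have "\<dots> \<le> norm (gh (x + z *\<^sub>R u) - gh x) * norm u - L * z * (norm u)^2"
    using norm_cauchy_schwarz[of "gh (x + z *\<^sub>R u) - gh x" u] by linarith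
  also have "\<dots> \<le> L * norm (z *\<^sub>R u) * norm u - L * z * (norm u)^2"
    using lip[of "x + z *\<^sub>R u" x] by (simp add: mult_right_mono)
  also have "\<dots> = 0" using z by (simp add: power2_eq_square)
  finally have "\<phi> 1 \<le> \<phi> 0" using z by simp
  then show ?thesis unfolding \<phi>_def by simp
qed

lemma L_smooth_neg:
  assumes "L_smooth L h gh" shows "L_smooth L (\<lambda>x. - h x) (\<lambda>x. - gh x)"
proof -
  have "GDERIV (\<lambda>x. - h x) y :> - gh y" for y
  proof -
    have "(h has_derivative (\<lambda>v. v \<bullet> gh y)) (at y)" using assms unfolding L_smooth_def gderiv_def by blast
    from has_derivative_minus[OF this] show ?thesis unfolding gderiv_def by simp
  qed
  moreover have "norm (- gh a - - gh b) \<le> L * norm (a - b)" for a b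
  proof -
    have "norm (- gh a - - gh b) = norm (gh a - gh b)"
      by (simp only: minus_diff_minus norm_minus_cancel norm_minus_commute)
    moreover have "norm (gh a - gh b) \<le> L * norm (a - b)" using assms unfolding L_smooth_def by blast
    ultimately show ?thesis by simp
  qed
  ultimately show ?thesis unfolding L_smooth_def by blast
qed

lemma smooth_lower:
  fixes h :: "'a::real_inner \<Rightarrow> real"
  assumes "L_smooth L h gh"
  shows "h (x + u) \<ge> h x + gh x \<bullet> u - L / 2 * (norm u)\<^sup>2"
  using smooth_upper[OF L_smooth_neg[OF assms], of x u] by simp
lemma young_norm:
  fixes a b :: "'a::real_inner"
  assumes "c > 0"
  shows "(norm (a + b))\<^sup>2 \<le> (1 + c) * (norm a)\<^sup>2 + (1 + 1 / c) * (norm b)\<^sup>2"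
proof -
  have "2 * (a \<bullet> b) \<le> 2 * (norm a * norm b)" using norm_cauchy_schwarz by simp
  also have "\<dots> \<le> c * (norm a)\<^sup>2 + (1/c) * (norm b)\<^sup>2"
  proof -
    have "0 \<le> (c * norm a - norm b)^2 / c" using assms by simp
    also have "\<dots> = c * (norm a)\<^sup>2 + (1/c) * (norm b)\<^sup>2 - 2 * (norm a * norm b)"
      using assms by (simp add: power2_eq_square field_simps)
    finally show ?thesis by simp
  qed
  finally have "2 * (a \<bullet> b) \<le> c * (norm a)\<^sup>2 + (1/c) * (norm b)\<^sup>2" .
  then show ?thesis
    by (simp add: power2_norm_eq_inner inner_add_left inner_add_right inner_commute algebra_simps)
qed

lemma norm_add_sq_le2:
  fixes a b :: "'a::real_inner"
  shows "(norm (a + b))\<^sup>2 \<le> 2 * (norm a)\<^sup>2 + 2 * (norm b)\<^sup>2"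
  using young_norm[of 1 a b] by simp

lemma momentum_ineq:
  fixes v x :: "'a::real_inner"
  assumes "0 \<le> \<mu>" "\<mu> < 1"
  shows "(norm (\<mu> *\<^sub>R v + x))\<^sup>2 \<le> (norm v)\<^sup>2 + (norm x)\<^sup>2 / (1 - \<mu>\<^sup>2)"
proof (cases "\<mu> = 0")
  case True then show ?thesis by simp
next
  case False
  then have mp: "\<mu> > 0" using assms by simp
  have "\<mu> * \<mu> \<le> \<mu> * 1" using assms by (intro mult_left_mono) auto
  then have m2: "\<mu>\<^sup>2 < 1" using assms by (simp add: power2_eq_square)
  have c: "1 / \<mu>\<^sup>2 - 1 > 0" using m2 mp by (simp add: field_simps)
  have "(norm (\<mu> *\<^sub>R v + x))\<^sup>2 \<le> (1 + (1/\<mu>\<^sup>2 - 1)) * (norm (\<mu> *\<^sub>R v))\<^sup>2 + (1 + 1 / (1/\<mu>\<^sup>2 - 1)) * (norm x)\<^sup>2"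
    by (rule young_norm[OF c])
  also have "(1 + (1/\<mu>\<^sup>2 - 1)) * (norm (\<mu> *\<^sub>R v))\<^sup>2 = (norm v)\<^sup>2"
    using mp by (simp add: power_mult_distrib)
  also have "1 + 1 / (1/\<mu>\<^sup>2 - 1) = 1 / (1 - \<mu>\<^sup>2)"
    using mp m2 by (simp add: field_simps)
  finally show ?thesis by simp
qed

lemma norm_sum_sq_weighted:
  fixes x :: "'i \<Rightarrow> 'a::real_inner"
  assumes "finite I" "\<And>i. i \<in> I \<Longrightarrow> w i \<ge> 0"
  shows "(norm (\<Sum>i\<in>I. w i *\<^sub>R x i))\<^sup>2 \<le> (\<Sum>i\<in>I. w i) * (\<Sum>i\<in>I. w i * (norm (x i))\<^sup>2)"
proof -
  have "norm (\<Sum>i\<in>I. w i *\<^sub>R x i) \<le> (\<Sum>i\<in>I. w i * norm (x i))"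
    using norm_sum[of "\<lambda>i. w i *\<^sub>R x i" I] assms by (simp add: abs_of_nonneg)
  then have "(norm (\<Sum>i\<in>I. w i *\<^sub>R x i))\<^sup>2 \<le> (\<Sum>i\<in>I. w i * norm (x i))\<^sup>2"
    by (simp add: power_mono)
  also have "(\<Sum>i\<in>I. w i * norm (x i)) = (\<Sum>i\<in>I. sqrt (w i) * (sqrt (w i) * norm (x i)))"
    using assms by (intro sum.cong) (auto simp: real_sqrt_mult_self mult.assoc[symmetric])
  also have "(\<dots>)\<^sup>2 \<le> (\<Sum>i\<in>I. (sqrt (w i))\<^sup>2) * (\<Sum>i\<in>I. (sqrt (w i) * norm (x i))\<^sup>2)"
    by (rule Cauchy_Schwarz_ineq_sum)
  also have "\<dots> = (\<Sum>i\<in>I. w i) * (\<Sum>i\<in>I. w i * (norm (x i))\<^sup>2)"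
    using assms by (simp add: power_mult_distrib)
  finally show ?thesis .
qed


lemma li_v:
  "snd (local_iter \<eta> \<mu> Proj g \<theta>0 n) = (\<Sum>k<n. (\<mu> ^ (n - 1 - k)) *\<^sub>R (Proj *v g k))"
proof (induction n)
  case 0 then show ?case by simp
next
  case (Suc n)
  have "snd (local_iter \<eta> \<mu> Proj g \<theta>0 (Suc n)) = \<mu> *\<^sub>R (\<Sum>k<n. (\<mu> ^ (n - 1 - k)) *\<^sub>R (Proj *v g k)) + Proj *v g n"
    using Suc by (simp add: Let_def)
  also have "\<mu> *\<^sub>R (\<Sum>k<n. (\<mu> ^ (n - 1 - k)) *\<^sub>R (Proj *v g k)) = (\<Sum>k<n. (\<mu> ^ (Suc n - 1 - k)) *\<^sub>R (Proj *v g k))"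
    unfolding scaleR_sum_right
  proof (intro sum.cong refl)
    fix k assume "k \<in> {..<n}"
    then have "Suc n - 1 - k = Suc (n - 1 - k)" by auto
    then show "\<mu> *\<^sub>R \<mu> ^ (n - 1 - k) *\<^sub>R (Proj *v g k) = \<mu> ^ (Suc n - 1 - k) *\<^sub>R (Proj *v g k)"
      by simp
  qed
  finally show ?case by simp
qed

lemma li_theta:
  "fst (local_iter \<eta> \<mu> Proj g \<theta>0 n) = \<theta>0 - \<eta> *\<^sub>R (\<Sum>k<n. (\<Sum>j<n - k. \<mu> ^ j) *\<^sub>R (Proj *v g k))"
proof (induction n)
  case 0 then show ?case by simp
next
  case (Suc n)
  have "fst (local_iter \<eta> \<mu> Proj g \<theta>0 (Suc n)) = fst (local_iter \<eta> \<mu> Proj g \<theta>0 n) - \<eta> *\<^sub>R snd (local_iter \<eta> \<mu> Proj g \<theta>0 (Suc n))"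
    by (simp add: Let_def)
  also have "\<dots> = \<theta>0 - \<eta> *\<^sub>R ((\<Sum>k<n. (\<Sum>j<n - k. \<mu> ^ j) *\<^sub>R (Proj *v g k)) + (\<Sum>k<Suc n. (\<mu> ^ (Suc n - 1 - k)) *\<^sub>R (Proj *v g k)))"
    unfolding Suc li_v by (simp add: algebra_simps)
  also have "(\<Sum>k<n. (\<Sum>j<n - k. \<mu> ^ j) *\<^sub>R (Proj *v g k)) + (\<Sum>k<Suc n. (\<mu> ^ (Suc n - 1 - k)) *\<^sub>R (Proj *v g k))
      = (\<Sum>k<n. ((\<Sum>j<n - k. \<mu> ^ j) + \<mu> ^ (n - k)) *\<^sub>R (Proj *v g k)) + Proj *v g n"
    by (simp add: sum.distrib scaleR_add_left)
  also have "(\<Sum>k<n. ((\<Sum>j<n - k. \<mu> ^ j) + \<mu> ^ (n - k)) *\<^sub>R (Proj *v g k)) = (\<Sum>k<n. (\<Sum>j<Suc n - k. \<mu> ^ j) *\<^sub>R (Proj *v g k))"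
  proof (intro sum.cong refl)
    fix k assume "k \<in> {..<n}"
    then have "Suc n - k = Suc (n - k)" by auto
    then show "((\<Sum>j<n - k. \<mu> ^ j) + \<mu> ^ (n - k)) *\<^sub>R (Proj *v g k) = (\<Sum>j<Suc n - k. \<mu> ^ j) *\<^sub>R (Proj *v g k)"
      by simp
  qed
  finally show ?case by simp
qed

lemma li_v_bound:
  assumes "0 \<le> \<mu>" "\<mu> < 1" and P: "\<And>k. norm (Proj *v g k) \<le> norm (g k)"
  shows "(norm (snd (local_iter \<eta> \<mu> Proj g \<theta>0 n)))\<^sup>2 \<le> (\<Sum>k<n. (norm (g k))\<^sup>2) / (1 - \<mu>\<^sup>2)"
proof (induction n)
  case 0 then show ?case by simp
next
  case (Suc n)
  have m2: "1 - \<mu>\<^sup>2 > 0"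
  proof -
    have "\<mu> * \<mu> \<le> \<mu> * 1" using assms by (intro mult_left_mono) auto
    then show ?thesis using assms by (simp add: power2_eq_square)
  qed
  have "(norm (snd (local_iter \<eta> \<mu> Proj g \<theta>0 (Suc n))))\<^sup>2
      = (norm (\<mu> *\<^sub>R snd (local_iter \<eta> \<mu> Proj g \<theta>0 n) + Proj *v g n))\<^sup>2"
    by (simp add: Let_def)
  also have "\<dots> \<le> (norm (snd (local_iter \<eta> \<mu> Proj g \<theta>0 n)))\<^sup>2 + (norm (Proj *v g n))\<^sup>2 / (1 - \<mu>\<^sup>2)"
    by (rule momentum_ineq[OF assms(1,2)])
  also have "\<dots> \<le> (\<Sum>k<n. (norm (g k))\<^sup>2) / (1 - \<mu>\<^sup>2) + (norm (g n))\<^sup>2 / (1 - \<mu>\<^sup>2)"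
    using Suc.IH P[of n] m2 by (intro add_mono divide_right_mono power_mono) auto
  also have "\<dots> = (\<Sum>k<Suc n. (norm (g k))\<^sup>2) / (1 - \<mu>\<^sup>2)"
    by (simp add: add_divide_distrib)
  finally show ?case .
qed

lemma li_theta_bound:
  assumes "0 \<le> \<mu>" "\<mu> < 1" and P: "\<And>k. norm (Proj *v g k) \<le> norm (g k)"
  shows "(norm (fst (local_iter \<eta> \<mu> Proj g \<theta>0 n) - \<theta>0))\<^sup>2 \<le> \<eta>\<^sup>2 * (real n)\<^sup>2 * (\<Sum>k<n. (norm (g k))\<^sup>2) / (1 - \<mu>\<^sup>2)"
proof (induction n)
  case 0 then show ?case by simp
next
  case (Suc n)
  have m2: "1 - \<mu>\<^sup>2 > 0"
  proof -
    have "\<mu> * \<mu> \<le> \<mu> * 1" using assms by (intro mult_left_mono) auto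
    then show ?thesis using assms by (simp add: power2_eq_square)
  qed
  define Y where "Y = (\<Sum>k<Suc n. (norm (g k))\<^sup>2) / (1 - \<mu>\<^sup>2)"
  have Y0: "(\<Sum>k<n. (norm (g k))\<^sup>2) / (1 - \<mu>\<^sup>2) \<le> Y"
    unfolding Y_def using m2 by (intro divide_right_mono) auto
  have vb: "(norm (snd (local_iter \<eta> \<mu> Proj g \<theta>0 (Suc n))))\<^sup>2 \<le> Y"
    unfolding Y_def by (rule li_v_bound[OF assms])
  define T where "T = fst (local_iter \<eta> \<mu> Proj g \<theta>0 n) - \<theta>0"
  define V where "V = snd (local_iter \<eta> \<mu> Proj g \<theta>0 (Suc n))"
  have eq: "fst (local_iter \<eta> \<mu> Proj g \<theta>0 (Suc n)) - \<theta>0 = T + (- \<eta> *\<^sub>R V)"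
    unfolding T_def V_def by (simp add: Let_def algebra_simps)
  have IH: "(norm T)\<^sup>2 \<le> \<eta>\<^sup>2 * (real n)\<^sup>2 * Y"
  proof -
    have "(norm T)\<^sup>2 \<le> \<eta>\<^sup>2 * (real n)\<^sup>2 * ((\<Sum>k<n. (norm (g k))\<^sup>2) / (1 - \<mu>\<^sup>2))"
      using Suc.IH unfolding T_def by simp
    also have "\<dots> \<le> \<eta>\<^sup>2 * (real n)\<^sup>2 * Y" using Y0 by (intro mult_left_mono) auto
    finally show ?thesis .
  qed
  have nV: "(norm (- \<eta> *\<^sub>R V))\<^sup>2 \<le> \<eta>\<^sup>2 * Y"
    using vb unfolding V_def by (simp add: power_mult_distrib mult_left_mono)
  show ?case
  proof (cases "n = 0")
    case True
    then have "T = 0" unfolding T_def by simp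
    then show ?thesis using nV True unfolding eq Y_def by simp
  next
    case False
    then have np: "real n > 0" by simp
    have "(norm (T + (- \<eta> *\<^sub>R V)))\<^sup>2 \<le> (1 + 1 / real n) * (norm T)\<^sup>2 + (1 + 1 / (1 / real n)) * (norm (- \<eta> *\<^sub>R V))\<^sup>2"
      by (rule young_norm) (use np in simp)
    also have "\<dots> \<le> (1 + 1 / real n) * (\<eta>\<^sup>2 * (real n)\<^sup>2 * Y) + (1 + real n) * (\<eta>\<^sup>2 * Y)"
      using IH nV np by (intro add_mono mult_left_mono) auto
    also have "\<dots> = \<eta>\<^sup>2 * (real (Suc n))\<^sup>2 * Y"
      using np by (simp add: field_simps power2_eq_square)
    finally show ?thesis unfolding eq Y_def by simp
  qed
qed

lemma alpha_w_eq:
  assumes "\<mu> < 1"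
  shows "alpha_w \<mu> \<tau> q = (\<Sum>j<\<tau> - q. \<mu> ^ j)"
  using assms by (simp add: alpha_w_def sum_gp_strict)

lemma alpha_w_nonneg:
  assumes "0 \<le> \<mu>" "\<mu> < 1" shows "alpha_w \<mu> \<tau> q \<ge> 0"
  using assms by (simp add: alpha_w_eq sum_nonneg)

lemma alpha_w_le:
  assumes "0 \<le> \<mu>" "\<mu> < 1" shows "alpha_w \<mu> \<tau> q \<le> 1 / (1 - \<mu>)"
proof -
  have "\<mu> ^ (\<tau> - q) \<ge> 0" using assms by simp
  then show ?thesis using assms unfolding alpha_w_def by (simp add: divide_right_mono)
qed

lemma alpha_w_ge1:
  assumes "0 \<le> \<mu>" "\<mu> < 1" "q < \<tau>" shows "alpha_w \<mu> \<tau> q \<ge> 1"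
proof -
  have "(\<Sum>j<\<tau> - q. \<mu> ^ j) \<ge> (\<Sum>j\<in>{0}. \<mu> ^ j)"
    using assms by (intro sum_mono2) auto
  then show ?thesis using assms by (simp add: alpha_w_eq)
qed

lemma S_tau_pos:
  assumes "0 \<le> \<mu>" "\<mu> < 1" "\<tau> \<ge> 1" shows "S_tau \<mu> \<tau> > 0"
proof -
  have "S_tau \<mu> \<tau> \<ge> (\<Sum>q<\<tau>. 1)" unfolding S_tau_def using alpha_w_ge1[OF assms(1,2)] by (intro sum_mono) auto
  then show ?thesis using assms by simp
qed

lemma S_tau_le:
  assumes "0 \<le> \<mu>" "\<mu> < 1" shows "S_tau \<mu> \<tau> \<le> real \<tau> / (1 - \<mu>)"
proof -
  have "S_tau \<mu> \<tau> \<le> (\<Sum>q<\<tau>. 1 / (1 - \<mu>))" unfolding S_tau_def using alpha_w_le[OF assms] by (intro sum_mono) auto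
  then show ?thesis by simp
qed

lemma li_theta_alpha:
  assumes "\<mu> < 1"
  shows "fst (local_iter \<eta> \<mu> Proj g \<theta>0 \<tau>) = \<theta>0 - \<eta> *\<^sub>R (\<Sum>k<\<tau>. alpha_w \<mu> \<tau> k *\<^sub>R (Proj *v g k))"
  unfolding li_theta alpha_w_eq[OF assms] ..


definition hq :: "'d \<Rightarrow> 'd \<Rightarrow> real^'r^'d \<Rightarrow> real" where
  "hq k l P = (\<Sum>m\<in>UNIV. P$k$m * P$l$m)"

definition flipm :: "'d::finite \<Rightarrow> real^'d^'d" where
  "flipm k = (\<chi> a b. if a = b then (if a = k then -1 else 1) else 0)"

definition swi :: "'d \<Rightarrow> 'd \<Rightarrow> 'd \<Rightarrow> 'd" where
  "swi k l a = (if a = k then l else if a = l then k else a)"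

definition swapm :: "'d::finite \<Rightarrow> 'd \<Rightarrow> real^'d^'d" where
  "swapm k l = (\<chi> a b. if b = swi k l a then 1 else 0)"

lemma swi_swi[simp]: "swi k l (swi k l a) = a"
  unfolding swi_def by auto

lemma swi_eq_iff: "(swi k l a = b) \<longleftrightarrow> (a = swi k l b)"
  unfolding swi_def by auto

lemma flipm_mult: "(flipm k ** P)$a$m = (if a = k then -1 else 1) * P$a$m"
proof -
  have "(flipm k ** P)$a$m = (\<Sum>b\<in>UNIV. (if a = b then (if a = k then -1 else 1) else 0) * P$b$m)"
    unfolding flipm_def matrix_matrix_mult_def by (simp only: vec_lambda_beta)
  also have "\<dots> = (\<Sum>b\<in>UNIV. if a = b then (if a = k then -1 else 1) * P$b$m else 0)"
    by (rule sum.cong) auto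
  also have "\<dots> = (if a = k then -1 else 1) * P$a$m"
    by (subst sum.delta') auto
  finally show ?thesis .
qed

lemma swapm_mult: "(swapm k l ** P)$a$m = P$(swi k l a)$m"
proof -
  have "(swapm k l ** P)$a$m = (\<Sum>b\<in>UNIV. (if b = swi k l a then 1 else 0) * P$b$m)"
    unfolding swapm_def matrix_matrix_mult_def by (simp only: vec_lambda_beta)
  also have "\<dots> = (\<Sum>b\<in>UNIV. if b = swi k l a then P$b$m else 0)"
    by (rule sum.cong) auto
  also have "\<dots> = P$(swi k l a)$m"
    by (subst sum.delta) auto
  finally show ?thesis .
qed

lemma orth_flipm: "orthogonal_matrix (flipm k)"
proof -
  have t: "transpose (flipm k) = flipm k"
    unfolding flipm_def transpose_def by (simp add: vec_eq_iff)
  have s: "flipm k ** flipm k = mat 1"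
    by (simp add: vec_eq_iff flipm_mult mat_def) (simp add: flipm_def)
  show ?thesis unfolding orthogonal_matrix_def t s by simp
qed

lemma orth_swapm: "orthogonal_matrix (swapm k l)"
proof -
  have t: "transpose (swapm k l) = swapm k l"
    unfolding swapm_def transpose_def by (auto simp: vec_eq_iff swi_def)
  have s: "swapm k l ** swapm k l = mat 1"
    by (simp add: vec_eq_iff swapm_mult mat_def) (simp add: swapm_def)
  show ?thesis unfolding orthogonal_matrix_def t s by simp
qed

lemma hq_cont: "continuous_on UNIV (hq k l)"
  unfolding hq_def by (intro continuous_intros)

lemma hq_borel: "hq k l \<in> borel_measurable borel"
  by (rule borel_measurable_continuous_onI[OF hq_cont])

lemma stiefel_col:
  fixes P :: "real^'r^'d" and m :: 'r
  shows "P \<in> stiefel \<Longrightarrow> (\<Sum>k\<in>UNIV. P$k$m * P$k$m) = 1"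
proof -
  assume "P \<in> stiefel"
  then have "(transpose P ** P)$m$m = (mat 1 :: real^'r^'r)$m$m" unfolding stiefel_def by simp
  then show ?thesis unfolding matrix_matrix_mult_def transpose_def mat_def by simp
qed

lemma stiefel_entry:
  fixes P :: "real^'r^'d" and m :: 'r
  shows "P \<in> stiefel \<Longrightarrow> \<bar>P$k$m\<bar> \<le> 1"
proof -
  assume "P \<in> stiefel"
  then have s: "(\<Sum>k\<in>UNIV. P$k$m * P$k$m) = 1" by (rule stiefel_col)
  have "P$k$m * P$k$m \<le> (\<Sum>k\<in>UNIV. P$k$m * P$k$m)"
    by (rule member_le_sum) auto
  then have "(P$k$m)^2 \<le> 1" using s by (simp add: power2_eq_square)
  then show ?thesis using power2_le_imp_le[of "\<bar>P$k$m\<bar>" 1] by simp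
qed

lemma hq_bound:
  fixes P :: "real^'r^'d"
  shows "P \<in> stiefel \<Longrightarrow> \<bar>hq k l P\<bar> \<le> real CARD('r)"
proof -
  assume st: "P \<in> stiefel"
  have "\<bar>hq k l P\<bar> \<le> (\<Sum>m\<in>(UNIV::'r set). \<bar>P$k$m * P$l$m\<bar>)"
    unfolding hq_def by (rule sum_abs)
  also have "\<dots> \<le> (\<Sum>m\<in>(UNIV::'r set). 1)"
  proof (intro sum_mono)
    fix m
    have "\<bar>P$k$m\<bar> * \<bar>P$l$m\<bar> \<le> 1 * 1"
      using stiefel_entry[OF st] by (intro mult_mono) auto
    then show "\<bar>P$k$m * P$l$m\<bar> \<le> 1" by (simp add: abs_mult)
  qed
  finally show ?thesis by simp
qed

lemma hq_trace:
  fixes P :: "real^'r^'d"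
  shows "P \<in> stiefel \<Longrightarrow> (\<Sum>k\<in>UNIV. hq k k P) = real CARD('r)"
proof -
  assume st: "P \<in> stiefel"
  have "(\<Sum>k\<in>UNIV. hq k k P) = (\<Sum>m\<in>(UNIV::'r set). \<Sum>k\<in>UNIV. P$k$m * P$k$m)"
    unfolding hq_def by (rule sum.swap)
  also have "\<dots> = (\<Sum>m\<in>(UNIV::'r set). 1)" using stiefel_col[OF st] by simp
  finally show ?thesis by simp
qed

lemma inner_proj_hq:
  fixes P :: "real^'r^'d"
  shows "x \<bullet> ((P ** transpose P) *v x) = (\<Sum>k\<in>UNIV. \<Sum>l\<in>UNIV. x$k * x$l * hq k l P)"
  unfolding inner_vec_def matrix_vector_mult_def matrix_matrix_mult_def transpose_def hq_def
  by (simp add: sum_distrib_left mult.commute mult.left_commute)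

context
  fixes Q :: "(real^'r^'d) measure"
  assumes Q: "haar_stiefel Q"
begin

lemma Q_prob: "prob_space Q" using Q unfolding haar_stiefel_def by auto
lemma Q_sets: "sets Q = sets borel" using Q unfolding haar_stiefel_def by auto

lemma Q_AE: "AE P in Q. P \<in> stiefel"
proof -
  have "stiefel \<in> sets Q" "emeasure Q stiefel = 1" using Q unfolding haar_stiefel_def by auto
  then have "measure Q stiefel = 1" by (simp add: measure_def)
  then show ?thesis using prob_space.AE_prob_1[OF Q_prob] by blast
qed

lemma Q_meas:
  fixes f :: "real^'r^'d \<Rightarrow> 'b::topological_space"
  assumes "f \<in> borel_measurable borel" shows "f \<in> borel_measurable Q"
  using assms measurable_cong_sets[OF Q_sets refl, of "borel :: 'b measure"] by simp

lemma hq_int: "integrable Q (hq k l)"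
proof -
  have "finite_measure Q" using Q_prob unfolding prob_space_def by blast
  moreover have "AE P in Q. norm (hq k l P) \<le> real CARD('r)"
    using Q_AE by eventually_elim (use hq_bound in auto)
  ultimately show ?thesis
    using finite_measure.integrable_const_bound Q_meas[OF hq_borel] by blast
qed

lemma Q_invariant:
  fixes U :: "real^'d^'d" and h :: "real^'r^'d \<Rightarrow> real"
  assumes U: "orthogonal_matrix U" and h: "h \<in> borel_measurable borel"
  shows "(\<integral>P. h P \<partial>Q) = (\<integral>P. h (U ** P) \<partial>Q)"
proof -
  have m: "(\<lambda>P. U ** P) \<in> Q \<rightarrow>\<^sub>M borel"
  proof -
    have "continuous_on UNIV (\<lambda>P::real^'r^'d. U ** P)"
      unfolding matrix_matrix_mult_def by (intro continuous_intros)
    then show ?thesis using Q_meas borel_measurable_continuous_onI by blast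
  qed
  have "(\<integral>P. h P \<partial>Q) = (\<integral>P. h P \<partial>(distr Q borel (\<lambda>P. U ** P)))"
    using Q U unfolding haar_stiefel_def by simp
  also have "\<dots> = (\<integral>P. h (U ** P) \<partial>Q)"
    by (rule integral_distr[OF m h])
  finally show ?thesis .
qed

lemma hq_offdiag: "k \<noteq> l \<Longrightarrow> (\<integral>P. hq k l P \<partial>Q) = 0"
proof -
  assume kl: "k \<noteq> l"
  have "(\<integral>P. hq k l P \<partial>Q) = (\<integral>P. hq k l (flipm k ** P) \<partial>Q)"
    by (rule Q_invariant[OF orth_flipm hq_borel])
  also have "\<dots> = (\<integral>P. - hq k l P \<partial>Q)"
    using kl by (simp add: hq_def flipm_mult sum_negf)
  also have "\<dots> = - (\<integral>P. hq k l P \<partial>Q)" by simp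
  finally show ?thesis by simp
qed

lemma hq_diag_eq: "(\<integral>P. hq k k P \<partial>Q) = (\<integral>P. hq l l P \<partial>Q)"
proof -
  have "(\<integral>P. hq k k P \<partial>Q) = (\<integral>P. hq k k (swapm k l ** P) \<partial>Q)"
    by (rule Q_invariant[OF orth_swapm hq_borel])
  also have "\<dots> = (\<integral>P. hq l l P \<partial>Q)"
    by (simp add: hq_def swapm_mult swi_def)
  finally show ?thesis .
qed

lemma hq_diag: "(\<integral>P. hq k k P \<partial>Q) = real CARD('r) / real CARD('d)"
proof -
  have "(\<Sum>j\<in>UNIV. (\<integral>P. hq j j P \<partial>Q)) = (\<integral>P. (\<Sum>j\<in>UNIV. hq j j P) \<partial>Q)"
    by (rule Bochner_Integration.integral_sum[symmetric]) (rule hq_int)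
  also have "\<dots> = (\<integral>P. real CARD('r) \<partial>Q)"
    by (rule integral_cong_AE) (use Q_AE hq_trace Q_meas in \<open>auto intro!: borel_measurable_sum hq_borel\<close>)
  also have "\<dots> = real CARD('r)" using prob_space.prob_space[OF Q_prob] by simp
  also have "(\<Sum>j\<in>UNIV. (\<integral>P. hq j j P \<partial>Q)) = (\<Sum>j\<in>(UNIV::'d set). (\<integral>P. hq k k P \<partial>Q))"
    by (rule sum.cong) (auto intro: hq_diag_eq)
  finally have "real CARD('d) * (\<integral>P. hq k k P \<partial>Q) = real CARD('r)"
    by simp
  then show ?thesis by (simp add: field_simps)
qed

lemma haar_quad:
  "integrable Q (\<lambda>P. x \<bullet> ((P ** transpose P) *v x))"
  "(\<integral>P. x \<bullet> ((P ** transpose P) *v x) \<partial>Q) = real CARD('r) / real CARD('d) * (norm x)\<^sup>2"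
proof -
  show "integrable Q (\<lambda>P. x \<bullet> ((P ** transpose P) *v x))"
    unfolding inner_proj_hq by (intro Bochner_Integration.integrable_sum integrable_mult_right hq_int)
  have "(\<integral>P. x \<bullet> ((P ** transpose P) *v x) \<partial>Q) = (\<Sum>k\<in>UNIV. \<Sum>l\<in>UNIV. x$k * x$l * (\<integral>P. hq k l P \<partial>Q))"
    unfolding inner_proj_hq
  proof -
    have "(\<integral>P. (\<Sum>k\<in>UNIV. \<Sum>l\<in>UNIV. x$k * x$l * hq k l P) \<partial>Q) = (\<Sum>k\<in>UNIV. (\<integral>P. (\<Sum>l\<in>UNIV. x$k * x$l * hq k l P) \<partial>Q))"
      by (rule Bochner_Integration.integral_sum) (auto intro!: integrable_mult_right hq_int)
    also have "\<dots> = (\<Sum>k\<in>UNIV. \<Sum>l\<in>UNIV. (\<integral>P. x$k * x$l * hq k l P \<partial>Q))"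
      by (intro sum.cong refl Bochner_Integration.integral_sum) (auto intro!: integrable_mult_right hq_int)
    also have "\<dots> = (\<Sum>k\<in>UNIV. \<Sum>l\<in>UNIV. x$k * x$l * (\<integral>P. hq k l P \<partial>Q))"
      by (intro sum.cong refl integral_mult_right_zero)
    finally show "(\<integral>P. (\<Sum>k\<in>UNIV. \<Sum>l\<in>UNIV. x$k * x$l * hq k l P) \<partial>Q) = (\<Sum>k\<in>UNIV. \<Sum>l\<in>UNIV. x$k * x$l * (\<integral>P. hq k l P \<partial>Q))" .
  qed
  also have "\<dots> = (\<Sum>k\<in>UNIV. x$k * x$k * (real CARD('r) / real CARD('d)))"
  proof (intro sum.cong refl)
    fix k
    have "(\<Sum>l\<in>UNIV. x$k * x$l * (\<integral>P. hq k l P \<partial>Q)) = (\<Sum>l\<in>UNIV. if l = k then x$k * x$k * (real CARD('r) / real CARD('d)) else 0)"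
      by (intro sum.cong refl) (auto simp: hq_offdiag hq_diag)
    then show "(\<Sum>l\<in>UNIV. x$k * x$l * (\<integral>P. hq k l P \<partial>Q)) = x$k * x$k * (real CARD('r) / real CARD('d))"
      by simp
  qed
  also have "\<dots> = real CARD('r) / real CARD('d) * (norm x)\<^sup>2"
    by (simp add: power2_norm_eq_inner inner_vec_def sum_distrib_left mult.commute)
  finally show "(\<integral>P. x \<bullet> ((P ** transpose P) *v x) \<partial>Q) = real CARD('r) / real CARD('d) * (norm x)\<^sup>2" .
qed

end


lemma meas_mvmult[measurable (raw)]:
  fixes A :: "'a \<Rightarrow> real^'n^'m" and x :: "'a \<Rightarrow> real^'n"
  assumes "A \<in> borel_measurable F" "x \<in> borel_measurable F"
  shows "(\<lambda>\<omega>. A \<omega> *v x \<omega>) \<in> borel_measurable F"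
proof -
  have c: "continuous_on UNIV (\<lambda>p::((real^'n^'m) \<times> (real^'n)). fst p *v snd p)"
    unfolding matrix_vector_mult_def by (intro continuous_intros)
  have "(\<lambda>\<omega>. (A \<omega>, x \<omega>)) \<in> borel_measurable F"
    using assms by (rule borel_measurable_Pair)
  from borel_measurable_continuous_on[OF c this] show ?thesis by simp
qed

lemma meas_proj:
  fixes P :: "'a \<Rightarrow> real^'r^'d"
  assumes "P \<in> borel_measurable F"
  shows "(\<lambda>\<omega>. P \<omega> ** transpose (P \<omega>)) \<in> borel_measurable F"
proof -
  have c: "continuous_on UNIV (\<lambda>p::(real^'r^'d). p ** transpose p)"
    unfolding matrix_matrix_mult_def transpose_def by (intro continuous_intros)
  from borel_measurable_continuous_on[OF c assms] show ?thesis .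
qed

lemma lipschitz_cont:
  fixes h :: "'a::metric_space \<Rightarrow> 'b::metric_space"
  assumes "\<And>x y. dist (h x) (h y) \<le> L * dist x y" "L \<ge> 0"
  shows "continuous_on UNIV h"
  by (rule lipschitz_on_continuous_on[of L]) (use assms in \<open>auto simp: lipschitz_on_def\<close>)

lemma L_smooth_cont_grad:
  fixes h :: "'a::real_inner \<Rightarrow> real"
  assumes "L_smooth L h gh" "L \<ge> 0"
  shows "continuous_on UNIV gh"
  using assms unfolding L_smooth_def by (intro lipschitz_cont[of _ L]) (auto simp: dist_norm)

lemma L_smooth_cont:
  fixes h :: "'a::real_inner \<Rightarrow> real"
  assumes "L_smooth L h gh"
  shows "continuous_on UNIV h"
proof -
  have "\<forall>x. GDERIV h x :> gh x" using assms unfolding L_smooth_def by blast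
  then have "\<forall>x. isCont h x"
    unfolding gderiv_def using has_derivative_continuous by blast
  then show ?thesis by (simp add: continuous_on_eq_continuous_at)
qed

lemma li_meas_both:
  fixes Proj :: "'a \<Rightarrow> real^'d^'d" and g :: "nat \<Rightarrow> 'a \<Rightarrow> real^'d"
  assumes "Proj \<in> borel_measurable F"
  shows "(\<forall>k<n. g k \<in> borel_measurable F) \<longrightarrow>
     (\<lambda>\<omega>. fst (local_iter \<eta> \<mu> (Proj \<omega>) (\<lambda>s. g s \<omega>) \<theta>0 n)) \<in> borel_measurable F \<and>
     (\<lambda>\<omega>. snd (local_iter \<eta> \<mu> (Proj \<omega>) (\<lambda>s. g s \<omega>) \<theta>0 n)) \<in> borel_measurable F"
proof (induction n)
  case 0
  show ?case by simp
next
  case (Suc n)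
  show ?case
  proof
    assume gs: "\<forall>k<Suc n. g k \<in> borel_measurable F"
    then have IH1: "(\<lambda>\<omega>. fst (local_iter \<eta> \<mu> (Proj \<omega>) (\<lambda>s. g s \<omega>) \<theta>0 n)) \<in> borel_measurable F"
     and IH2: "(\<lambda>\<omega>. snd (local_iter \<eta> \<mu> (Proj \<omega>) (\<lambda>s. g s \<omega>) \<theta>0 n)) \<in> borel_measurable F"
      using Suc by auto
    have gn: "g n \<in> borel_measurable F" using gs by auto
    have v: "(\<lambda>\<omega>. \<mu> *\<^sub>R snd (local_iter \<eta> \<mu> (Proj \<omega>) (\<lambda>s. g s \<omega>) \<theta>0 n) + Proj \<omega> *v g n \<omega>) \<in> borel_measurable F"
      using IH2 gn assms(1) by (intro borel_measurable_add borel_measurable_scaleR meas_mvmult) auto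
    have "(\<lambda>\<omega>. fst (local_iter \<eta> \<mu> (Proj \<omega>) (\<lambda>s. g s \<omega>) \<theta>0 n) - \<eta> *\<^sub>R (\<mu> *\<^sub>R snd (local_iter \<eta> \<mu> (Proj \<omega>) (\<lambda>s. g s \<omega>) \<theta>0 n) + Proj \<omega> *v g n \<omega>)) \<in> borel_measurable F"
      using IH1 v by (intro borel_measurable_diff borel_measurable_scaleR) auto
    then show "(\<lambda>\<omega>. fst (local_iter \<eta> \<mu> (Proj \<omega>) (\<lambda>s. g s \<omega>) \<theta>0 (Suc n))) \<in> borel_measurable F \<and>
     (\<lambda>\<omega>. snd (local_iter \<eta> \<mu> (Proj \<omega>) (\<lambda>s. g s \<omega>) \<theta>0 (Suc n))) \<in> borel_measurable F"
      using v by (simp add: Let_def)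
  qed
qed

lemma li_meas:
  fixes Proj :: "'a \<Rightarrow> real^'d^'d" and g :: "nat \<Rightarrow> 'a \<Rightarrow> real^'d"
  assumes "Proj \<in> borel_measurable F" "\<And>k. k < n \<Longrightarrow> g k \<in> borel_measurable F"
  shows "(\<lambda>\<omega>. fst (local_iter \<eta> \<mu> (Proj \<omega>) (\<lambda>s. g s \<omega>) \<theta>0 n)) \<in> borel_measurable F"
  using li_meas_both[OF assms(1), of n g] assms(2) by auto


locale fed =
  fixes M :: "'w measure"
    and P :: "'w \<Rightarrow> real^'r^'d"
    and g :: "nat \<Rightarrow> nat \<Rightarrow> 'w \<Rightarrow> real^'d"
    and F :: "nat \<Rightarrow> real^'d \<Rightarrow> real" and gF :: "nat \<Rightarrow> real^'d \<Rightarrow> real^'d"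
    and f :: "real^'d \<Rightarrow> real" and gf :: "real^'d \<Rightarrow> real^'d"
    and N \<tau> :: nat and \<mu> \<eta> L \<sigma>L \<sigma>G :: real and \<theta>0 :: "real^'d"
  assumes gf_def: "gf = (\<lambda>\<theta>. (1 / real N) *\<^sub>R (\<Sum>i<N. gF i \<theta>))"
    and N_pos: "N \<ge> 1" and tau_pos: "\<tau> \<ge> 1"
    and r_le_d: "CARD('r) \<le> CARD('d)"
    and mu: "0 \<le> \<mu>" "\<mu> < 1" and eta_pos: "\<eta> > 0" and L_pos: "L > 0"
    and f_smooth: "L_smooth L f gf"
    and F_smooth: "\<forall>i<N. L_smooth L (F i) (gF i)"
    and M: "prob_space M"
    and P_meas: "P \<in> borel_measurable M"
    and P_haar: "haar_stiefel (distr M borel P)"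
    and g_meas: "\<forall>i<N. \<forall>s<\<tau>. g i s \<in> borel_measurable M"
    and unbiased: "\<forall>i<N. \<forall>s<\<tau>. integrable M (g i s) \<and>
        (\<forall>A \<in> sets (info_sigma M P g N \<tau> i s).
           (\<integral>\<omega>. indicator A \<omega> *\<^sub>R g i s \<omega> \<partial>M) =
           (\<integral>\<omega>. indicator A \<omega> *\<^sub>R
               gF i (fst (local_iter \<eta> \<mu> (P \<omega> ** transpose (P \<omega>)) (\<lambda>s'. g i s' \<omega>) \<theta>0 s)) \<partial>M))"
    and var_bound: "\<forall>i<N. \<forall>s<\<tau>.
        integrable M (\<lambda>\<omega>. (norm (g i s \<omega> -
           gF i (fst (local_iter \<eta> \<mu> (P \<omega> ** transpose (P \<omega>)) (\<lambda>s'. g i s' \<omega>) \<theta>0 s))))\<^sup>2) \<and>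
        (\<forall>A \<in> sets (info_sigma M P g N \<tau> i s).
           (\<integral>\<omega>. indicator A \<omega> * (norm (g i s \<omega> -
              gF i (fst (local_iter \<eta> \<mu> (P \<omega> ** transpose (P \<omega>)) (\<lambda>s'. g i s' \<omega>) \<theta>0 s))))\<^sup>2 \<partial>M)
           \<le> \<sigma>L\<^sup>2 * measure M A)"
    and heterogeneity: "\<forall>i<N. \<forall>\<theta>. (norm (gF i \<theta> - gf \<theta>))\<^sup>2 \<le> \<sigma>G\<^sup>2"
    and eta1: "\<eta> \<le> sqrt ((1 - \<mu>\<^sup>2) / (6 * L\<^sup>2 * real \<tau> ^ 3))"
    and eta2: "\<eta> \<le> 1 / (L * S_tau \<mu> \<tau>)"
begin

definition Pi :: "'w \<Rightarrow> real^'d^'d" where "Pi \<omega> = P \<omega> ** transpose (P \<omega>)"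
definition th :: "nat \<Rightarrow> nat \<Rightarrow> 'w \<Rightarrow> real^'d" where
  "th i s \<omega> = fst (local_iter \<eta> \<mu> (Pi \<omega>) (\<lambda>s'. g i s' \<omega>) \<theta>0 s)"
definition xi :: "nat \<Rightarrow> nat \<Rightarrow> 'w \<Rightarrow> real^'d" where
  "xi i s \<omega> = g i s \<omega> - gF i (th i s \<omega>)"
definition Fi :: "nat \<Rightarrow> nat \<Rightarrow> 'w measure" where
  "Fi i s = info_sigma M P g N \<tau> i s"

definition Gen :: "nat \<Rightarrow> nat \<Rightarrow> 'w set set" where
  "Gen i s = ({P -` A \<inter> space M | A. A \<in> sets borel} \<union>
      {g j s' -` A \<inter> space M | j s' A. j < N \<and> s' < \<tau> \<and> (j \<noteq> i \<or> s' < s) \<and> A \<in> sets borel})"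

lemma Fi_eq: "Fi i s = sigma (space M) (Gen i s)"
  unfolding Fi_def info_sigma_def Gen_def by simp

lemma Gen_pow: "Gen i s \<subseteq> Pow (space M)"
  unfolding Gen_def by auto

lemma Gen_sets: "Gen i s \<subseteq> sets M"
proof -
  have "P -` A \<inter> space M \<in> sets M" if "A \<in> sets borel" for A
    using measurable_sets[OF P_meas that] .
  moreover have "g j s' -` A \<inter> space M \<in> sets M" if "j < N" "s' < \<tau>" "A \<in> sets borel" for j s' A
    using measurable_sets[of "g j s'" M borel A] g_meas that by auto
  ultimately show ?thesis unfolding Gen_def by blast
qed

lemma Fi_space[simp]: "space (Fi i s) = space M"
  unfolding Fi_eq by (simp add: space_measure_of_conv)

lemma Fi_sets_eq: "sets (Fi i s) = sigma_sets (space M) (Gen i s)"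
  unfolding Fi_eq by (rule sets_measure_of[OF Gen_pow])

lemma Fi_subalg: "subalgebra M (Fi i s)"
  unfolding subalgebra_def Fi_sets_eq using sets.sigma_sets_subset[OF Gen_sets] by simp

lemma Gen_in_Fi: "A \<in> Gen i s \<Longrightarrow> A \<in> sets (Fi i s)"
  unfolding Fi_sets_eq by (rule sigma_sets.Basic)

lemma P_Fi: "P \<in> borel_measurable (Fi i s)"
proof (rule measurableI)
  fix A :: "(real^'r^'d) set" assume "A \<in> sets borel"
  then have "P -` A \<inter> space M \<in> Gen i s" unfolding Gen_def by blast
  then show "P -` A \<inter> space (Fi i s) \<in> sets (Fi i s)" using Gen_in_Fi by simp
qed simp

lemma g_Fi:
  assumes "j < N" "k < \<tau>" "j \<noteq> i \<or> k < s"
  shows "g j k \<in> borel_measurable (Fi i s)"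
proof (rule measurableI)
  fix A :: "(real^'d) set" assume "A \<in> sets borel"
  then have "g j k -` A \<inter> space M \<in> Gen i s" unfolding Gen_def using assms by blast
  then show "g j k -` A \<inter> space (Fi i s) \<in> sets (Fi i s)" using Gen_in_Fi by simp
qed simp

lemma Pi_meas_gen: "P \<in> borel_measurable F' \<Longrightarrow> Pi \<in> borel_measurable F'"
  unfolding Pi_def[abs_def] by (rule meas_proj)

lemma th_meas_gen:
  assumes "P \<in> borel_measurable F'" "\<And>k. k < s \<Longrightarrow> g i k \<in> borel_measurable F'"
  shows "th i s \<in> borel_measurable F'"
  unfolding th_def[abs_def] by (rule li_meas[OF Pi_meas_gen[OF assms(1)] assms(2)])

lemma gF_cont: "i < N \<Longrightarrow> continuous_on UNIV (gF i)"
  using F_smooth L_pos by (intro L_smooth_cont_grad[of L "F i"]) auto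

lemma gF_meas_gen: "i < N \<Longrightarrow> X \<in> borel_measurable F' \<Longrightarrow> (\<lambda>\<omega>. gF i (X \<omega>)) \<in> borel_measurable F'"
  using borel_measurable_continuous_on[OF gF_cont] by blast

lemma xi_meas_gen:
  assumes "i < N" "P \<in> borel_measurable F'" "\<And>k. k \<le> s \<Longrightarrow> g i k \<in> borel_measurable F'"
  shows "xi i s \<in> borel_measurable F'"
  unfolding xi_def[abs_def] using assms
  by (intro borel_measurable_diff gF_meas_gen th_meas_gen) auto

lemma th_M: "i < N \<Longrightarrow> s \<le> \<tau> \<Longrightarrow> th i s \<in> borel_measurable M"
  using g_meas P_meas by (intro th_meas_gen) auto

lemma xi_M: "i < N \<Longrightarrow> s < \<tau> \<Longrightarrow> xi i s \<in> borel_measurable M"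
  using g_meas P_meas by (intro xi_meas_gen) auto

lemma Pi_M: "Pi \<in> borel_measurable M"
  using Pi_meas_gen[OF P_meas] .

lemma xi_Fi:
  assumes "i < N" "j < N" "k < \<tau>" "j \<noteq> i \<or> k < s"
  shows "xi j k \<in> borel_measurable (Fi i s)"
  using assms by (intro xi_meas_gen P_Fi g_Fi) auto

end


lemma inner_mv_transpose:
  fixes A :: "real^'n^'m"
  shows "(A *v x) \<bullet> y = x \<bullet> (transpose A *v y)"
proof -
  have "(A *v x) \<bullet> y = (\<Sum>i\<in>UNIV. \<Sum>j\<in>UNIV. A$i$j * x$j * y$i)"
    unfolding inner_vec_def matrix_vector_mult_def by (simp add: sum_distrib_right)
  also have "\<dots> = (\<Sum>j\<in>UNIV. \<Sum>i\<in>UNIV. A$i$j * x$j * y$i)" by (rule sum.swap)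
  also have "\<dots> = x \<bullet> (transpose A *v y)"
    unfolding inner_vec_def matrix_vector_mult_def transpose_def
    by (simp add: sum_distrib_left mult.commute mult.left_commute)
  finally show ?thesis .
qed

lemma stiefel_proj:
  fixes Q :: "real^'r^'d"
  assumes "Q \<in> stiefel"
  defines "Pm \<equiv> Q ** transpose Q"
  shows "transpose Pm = Pm" "Pm ** Pm = Pm"
    "\<And>a b. (Pm *v a) \<bullet> b = a \<bullet> (Pm *v b)"
    "\<And>a b. (Pm *v a) \<bullet> (Pm *v b) = a \<bullet> (Pm *v b)"
    "\<And>a. norm (Pm *v a) \<le> norm a"
proof -
  have QQ: "transpose Q ** Q = mat 1" using assms unfolding stiefel_def by simp
  show t: "transpose Pm = Pm" unfolding Pm_def by (simp add: matrix_transpose_mul)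
  show pp: "Pm ** Pm = Pm" unfolding Pm_def
    by (simp add: matrix_mul_assoc) (simp add: matrix_mul_assoc[symmetric] QQ)
  show s: "(Pm *v a) \<bullet> b = a \<bullet> (Pm *v b)" for a b
    using inner_mv_transpose[of Pm a b] t by simp
  show pp2: "(Pm *v a) \<bullet> (Pm *v b) = a \<bullet> (Pm *v b)" for a b
    using s[of a "Pm *v b"] pp by (simp add: matrix_vector_mul_assoc)
  show "norm (Pm *v a) \<le> norm a" for a
  proof -
    have "(norm (Pm *v a))\<^sup>2 = a \<bullet> (Pm *v a)" using pp2[of a a] by (simp add: power2_norm_eq_inner)
    also have "\<dots> \<le> norm a * norm (Pm *v a)" by (rule norm_cauchy_schwarz)
    finally have "norm (Pm *v a) * norm (Pm *v a) \<le> norm a * norm (Pm *v a)" by (simp add: power2_eq_square)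
    then show ?thesis
      by (cases "norm (Pm *v a) = 0") (auto simp: mult_le_cancel_right)
  qed
qed

context fed
begin

lemma Q_haar: "haar_stiefel (distr M borel P)" by (rule P_haar)

lemma AE_stiefel: "AE \<omega> in M. P \<omega> \<in> stiefel"
proof -
  have "AE Q in distr M borel P. Q \<in> stiefel" by (rule Q_AE[OF P_haar])
  moreover have "(stiefel :: (real^'r^'d) set) \<in> sets borel" using P_haar unfolding haar_stiefel_def by simp
  ultimately show ?thesis
    using AE_distr_iff[OF P_meas, of "\<lambda>Q. Q \<in> stiefel"] by simp
qed

lemma AE_Pi:
  "AE \<omega> in M. (\<forall>a b. (Pi \<omega> *v a) \<bullet> b = a \<bullet> (Pi \<omega> *v b)) \<and>
                (\<forall>a b. (Pi \<omega> *v a) \<bullet> (Pi \<omega> *v b) = a \<bullet> (Pi \<omega> *v b)) \<and>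
                (\<forall>a. norm (Pi \<omega> *v a) \<le> norm a)"
  using AE_stiefel
proof eventually_elim
  case (elim \<omega>)
  show ?case unfolding Pi_def using stiefel_proj[OF elim] by auto
qed

lemma prob: "prob_space M" by (rule M)

interpretation pM: prob_space M by (rule M)

definition sqint :: "('w \<Rightarrow> 'v::real_normed_vector) \<Rightarrow> bool" where
  "sqint X \<longleftrightarrow> X \<in> borel_measurable M \<and> integrable M (\<lambda>\<omega>. (norm (X \<omega>))\<^sup>2)"

lemma sqint_bound:
  fixes X :: "'w \<Rightarrow> 'a::real_normed_vector" and Y :: "'w \<Rightarrow> 'b::real_normed_vector"
  assumes "sqint X" "Y \<in> borel_measurable M" "AE \<omega> in M. norm (Y \<omega>) \<le> c + b * norm (X \<omega>)"
  shows "sqint Y"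
proof -
  have "integrable M (\<lambda>\<omega>. 2 * c\<^sup>2 + 2 * b\<^sup>2 * (norm (X \<omega>))\<^sup>2)"
    using assms(1) unfolding sqint_def by (intro Bochner_Integration.integrable_add integrable_mult_right) auto
  moreover have "AE \<omega> in M. norm ((norm (Y \<omega>))\<^sup>2) \<le> norm (2 * c\<^sup>2 + 2 * b\<^sup>2 * (norm (X \<omega>))\<^sup>2)"
    using assms(3)
  proof eventually_elim
    case (elim \<omega>)
    have "0 \<le> norm (Y \<omega>)" by simp
    then have "(norm (Y \<omega>))\<^sup>2 \<le> (c + b * norm (X \<omega>))\<^sup>2" using elim by (intro power_mono) auto
    also have "\<dots> \<le> 2 * c\<^sup>2 + 2 * b\<^sup>2 * (norm (X \<omega>))\<^sup>2"
      using sum_squares_bound[of c "b * norm (X \<omega>)"] by (simp add: power_mult_distrib algebra_simps power2_eq_square)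
    finally show ?case by simp
  qed
  moreover have "(\<lambda>\<omega>. (norm (Y \<omega>))\<^sup>2) \<in> borel_measurable M" using assms(2) by measurable
  ultimately have "integrable M (\<lambda>\<omega>. (norm (Y \<omega>))\<^sup>2)"
    using Bochner_Integration.integrable_bound by blast
  then show ?thesis using assms(2) unfolding sqint_def by simp
qed


lemma sqint_add:
  fixes X Y :: "'w \<Rightarrow> 'a::euclidean_space"
  assumes "sqint X" "sqint Y"
  shows "sqint (\<lambda>\<omega>. X \<omega> + Y \<omega>)"
proof -
  have m: "(\<lambda>\<omega>. X \<omega> + Y \<omega>) \<in> borel_measurable M" using assms unfolding sqint_def by auto
  have "integrable M (\<lambda>\<omega>. 2 * (norm (X \<omega>))\<^sup>2 + 2 * (norm (Y \<omega>))\<^sup>2)"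
    using assms unfolding sqint_def by (intro Bochner_Integration.integrable_add integrable_mult_right) auto
  moreover have "AE \<omega> in M. norm ((norm (X \<omega> + Y \<omega>))\<^sup>2) \<le> norm (2 * (norm (X \<omega>))\<^sup>2 + 2 * (norm (Y \<omega>))\<^sup>2)"
    using norm_add_sq_le2 by (intro AE_I2) simp
  moreover have "(\<lambda>\<omega>. (norm (X \<omega> + Y \<omega>))\<^sup>2) \<in> borel_measurable M" using m by measurable
  ultimately have "integrable M (\<lambda>\<omega>. (norm (X \<omega> + Y \<omega>))\<^sup>2)"
    using Bochner_Integration.integrable_bound by blast
  then show ?thesis using m unfolding sqint_def by simp
qed

lemma sqint_scale:
  fixes X :: "'w \<Rightarrow> 'a::euclidean_space"
  assumes "sqint X"
  shows "sqint (\<lambda>\<omega>. c *\<^sub>R X \<omega>)"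
  by (rule sqint_bound[OF assms, of _ 0 "\<bar>c\<bar>"]) (use assms in \<open>auto simp: sqint_def\<close>)

lemma sqint_minus:
  fixes X Y :: "'w \<Rightarrow> 'a::euclidean_space"
  assumes "sqint X" "sqint Y"
  shows "sqint (\<lambda>\<omega>. X \<omega> - Y \<omega>)"
  using sqint_add[OF assms(1) sqint_scale[OF assms(2), of "-1"]] by simp

lemma sqint_const: "sqint (\<lambda>\<omega>. v)"
  unfolding sqint_def by simp

lemma sqint_sum:
  fixes X :: "'i \<Rightarrow> 'w \<Rightarrow> 'a::euclidean_space"
  assumes "finite I" "\<And>i. i \<in> I \<Longrightarrow> sqint (X i)"
  shows "sqint (\<lambda>\<omega>. \<Sum>i\<in>I. X i \<omega>)"
  using assms
proof (induction I rule: finite_induct)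
  case empty then show ?case using sqint_const[of 0] by simp
next
  case (insert x F)
  then show ?case using sqint_add[of "X x" "\<lambda>\<omega>. \<Sum>i\<in>F. X i \<omega>"] by simp
qed

lemma sqint_Pi:
  assumes "sqint X"
  shows "sqint (\<lambda>\<omega>. Pi \<omega> *v X \<omega>)"
proof (rule sqint_bound[OF assms, of _ 0 1])
  show "(\<lambda>\<omega>. Pi \<omega> *v X \<omega>) \<in> borel_measurable M"
    using assms Pi_M unfolding sqint_def by (intro meas_mvmult) auto
  show "AE \<omega> in M. norm (Pi \<omega> *v X \<omega>) \<le> 0 + 1 * norm (X \<omega>)"
    using AE_Pi by eventually_elim auto
qed

lemma sqint_int:
  fixes X :: "'w \<Rightarrow> 'a::euclidean_space"
  assumes "sqint X" shows "integrable M X"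
proof -
  have "integrable M (\<lambda>\<omega>. 1 + (norm (X \<omega>))\<^sup>2)"
    using assms unfolding sqint_def by (intro Bochner_Integration.integrable_add) auto
  moreover have "AE \<omega> in M. norm (X \<omega>) \<le> norm (1 + (norm (X \<omega>))\<^sup>2)"
  proof (intro AE_I2)
    fix \<omega>
    have "norm (X \<omega>) \<le> 1 + (norm (X \<omega>))\<^sup>2"
    proof -
      have a: "2 * norm (X \<omega>) \<le> 1 + (norm (X \<omega>))\<^sup>2"
        using sum_squares_bound[of 1 "norm (X \<omega>)"] by simp
      have "norm (X \<omega>) \<le> 2 * norm (X \<omega>)" by simp
      then show ?thesis using a by linarith
    qed
    then show "norm (X \<omega>) \<le> norm (1 + (norm (X \<omega>))\<^sup>2)" by simp
  qed
  ultimately show ?thesis using Bochner_Integration.integrable_bound assms unfolding sqint_def by blast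
qed

lemma sqint_inner:
  fixes X Y :: "'w \<Rightarrow> 'a::euclidean_space"
  assumes "sqint X" "sqint Y"
  shows "integrable M (\<lambda>\<omega>. X \<omega> \<bullet> Y \<omega>)"
proof -
  have mX: "X \<in> borel_measurable M" and mY: "Y \<in> borel_measurable M" using assms unfolding sqint_def by auto
  have m: "(\<lambda>\<omega>. X \<omega> \<bullet> Y \<omega>) \<in> borel_measurable M" using borel_measurable_inner[OF mX mY] .
  have "integrable M (\<lambda>\<omega>. (norm (X \<omega>))\<^sup>2 + (norm (Y \<omega>))\<^sup>2)"
    using assms unfolding sqint_def by (intro Bochner_Integration.integrable_add) auto
  moreover have "AE \<omega> in M. norm (X \<omega> \<bullet> Y \<omega>) \<le> norm ((norm (X \<omega>))\<^sup>2 + (norm (Y \<omega>))\<^sup>2)"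
  proof (intro AE_I2)
    fix \<omega>
    have "\<bar>X \<omega> \<bullet> Y \<omega>\<bar> \<le> norm (X \<omega>) * norm (Y \<omega>)" by (rule Cauchy_Schwarz_ineq2)
    also have "\<dots> \<le> (norm (X \<omega>))\<^sup>2 + (norm (Y \<omega>))\<^sup>2"
    proof -
      have a: "2 * (norm (X \<omega>) * norm (Y \<omega>)) \<le> (norm (X \<omega>))\<^sup>2 + (norm (Y \<omega>))\<^sup>2"
        using sum_squares_bound[of "norm (X \<omega>)" "norm (Y \<omega>)"] by simp
      have "0 \<le> norm (X \<omega>) * norm (Y \<omega>)" by simp
      then show ?thesis using a by linarith
    qed
    finally show "norm (X \<omega> \<bullet> Y \<omega>) \<le> norm ((norm (X \<omega>))\<^sup>2 + (norm (Y \<omega>))\<^sup>2)" by simp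
  qed
  ultimately show ?thesis using Bochner_Integration.integrable_bound m by blast
qed

end


context fed
begin

lemma gF_lip: "i < N \<Longrightarrow> norm (gF i a - gF i b) \<le> L * norm (a - b)"
  using F_smooth unfolding L_smooth_def by blast

lemma th_closed:
  "th i s \<omega> = \<theta>0 - \<eta> *\<^sub>R (\<Sum>k<s. (\<Sum>j<s - k. \<mu> ^ j) *\<^sub>R (Pi \<omega> *v g i k \<omega>))"
  unfolding th_def by (rule li_theta)

lemma xi_sq_eq: "(norm (xi i s \<omega>))\<^sup>2 = (norm (g i s \<omega> -
           gF i (fst (local_iter \<eta> \<mu> (P \<omega> ** transpose (P \<omega>)) (\<lambda>s'. g i s' \<omega>) \<theta>0 s))))\<^sup>2"
  unfolding xi_def th_def Pi_def ..

lemma sqint_th_of: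
  assumes "i < N" "s \<le> \<tau>" "\<And>k. k < s \<Longrightarrow> sqint (g i k)"
  shows "sqint (th i s)"
proof -
  have "sqint (\<lambda>\<omega>. \<theta>0 - \<eta> *\<^sub>R (\<Sum>k<s. (\<Sum>j<s - k. \<mu> ^ j) *\<^sub>R (Pi \<omega> *v g i k \<omega>)))"
    using assms(3)
    by (intro sqint_minus sqint_const sqint_scale sqint_sum sqint_Pi) auto
  then show ?thesis unfolding th_closed[abs_def] .
qed

lemma sqint_gFth_of:
  assumes "i < N" "s \<le> \<tau>" "sqint (th i s)"
  shows "sqint (\<lambda>\<omega>. gF i (th i s \<omega>))"
proof (rule sqint_bound[OF assms(3), of _ "norm (gF i \<theta>0) + L * norm \<theta>0" L])
  show "(\<lambda>\<omega>. gF i (th i s \<omega>)) \<in> borel_measurable M"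
    using assms th_M by (intro gF_meas_gen) auto
  show "AE \<omega> in M. norm (gF i (th i s \<omega>)) \<le> norm (gF i \<theta>0) + L * norm \<theta>0 + L * norm (th i s \<omega>)"
  proof (intro AE_I2)
    fix \<omega>
    have "norm (gF i (th i s \<omega>)) \<le> norm (gF i \<theta>0) + norm (gF i (th i s \<omega>) - gF i \<theta>0)"
      by (metis add.commute diff_add_cancel norm_triangle_ineq)
    also have "\<dots> \<le> norm (gF i \<theta>0) + L * norm (th i s \<omega> - \<theta>0)"
      using gF_lip[OF assms(1)] by simp
    also have "L * norm (th i s \<omega> - \<theta>0) \<le> L * (norm (th i s \<omega>) + norm \<theta>0)"
      using L_pos norm_triangle_ineq4 by (intro mult_left_mono) auto
    finally show "norm (gF i (th i s \<omega>)) \<le> norm (gF i \<theta>0) + L * norm \<theta>0 + L * norm (th i s \<omega>)"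
      by (simp add: algebra_simps)
  qed
qed

lemma sqint_xi:
  assumes "i < N" "s < \<tau>"
  shows "sqint (xi i s)"
  using var_bound assms xi_M[OF assms] unfolding sqint_def xi_sq_eq by auto

lemma sqint_g_all:
  assumes "i < N"
  shows "s \<le> \<tau> \<Longrightarrow> \<forall>k<s. sqint (g i k)"
proof (induction s)
  case 0 then show ?case by simp
next
  case (Suc s)
  then have IH: "\<forall>k<s. sqint (g i k)" by simp
  have th: "sqint (th i s)" using IH Suc.prems assms by (intro sqint_th_of) auto
  have gt: "sqint (\<lambda>\<omega>. gF i (th i s \<omega>))" using th Suc.prems assms by (intro sqint_gFth_of) auto
  have x: "sqint (xi i s)" using Suc.prems assms by (intro sqint_xi) auto
  have "sqint (\<lambda>\<omega>. xi i s \<omega> + gF i (th i s \<omega>))" by (rule sqint_add[OF x gt])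
  then have "sqint (g i s)" unfolding xi_def by simp
  then show ?case using IH less_Suc_eq by auto
qed

lemma sqint_g: "i < N \<Longrightarrow> k < \<tau> \<Longrightarrow> sqint (g i k)"
  using sqint_g_all[of i \<tau>] by auto

lemma sqint_th: "i < N \<Longrightarrow> s \<le> \<tau> \<Longrightarrow> sqint (th i s)"
  using sqint_g by (intro sqint_th_of) auto

lemma sqint_gFth: "i < N \<Longrightarrow> s \<le> \<tau> \<Longrightarrow> sqint (\<lambda>\<omega>. gF i (th i s \<omega>))"
  using sqint_th by (intro sqint_gFth_of) auto

end


context fed
begin

lemma meas_nth:
  fixes X :: "'a \<Rightarrow> real^'d"
  assumes "X \<in> borel_measurable F'" shows "(\<lambda>\<omega>. X \<omega> $ c) \<in> borel_measurable F'"
  using borel_measurable_continuous_on[OF linear_continuous_on[OF bounded_linear_vec_nth] assms] .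

lemma sqint_comp:
  fixes X :: "'w \<Rightarrow> real^'d"
  assumes "sqint X" shows "sqint (\<lambda>\<omega>. X \<omega> $ c)"
proof (rule sqint_bound[OF assms, of _ 0 1])
  show "(\<lambda>\<omega>. X \<omega> $ c) \<in> borel_measurable M" using assms unfolding sqint_def by (intro meas_nth) auto
  show "AE \<omega> in M. norm (X \<omega> $ c) \<le> 0 + 1 * norm (X \<omega>)"
    using component_le_norm_cart by (intro AE_I2) simp
qed

lemma sqint_real_mult:
  fixes X Y :: "'w \<Rightarrow> real"
  assumes "sqint X" "sqint Y" shows "integrable M (\<lambda>\<omega>. X \<omega> * Y \<omega>)"
  using sqint_inner[OF assms] by simp

lemma xi_ind_zero:
  assumes "i < N" "s < \<tau>" "A \<in> sets (Fi i s)"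
  shows "(\<integral>\<omega>. indicator A \<omega> *\<^sub>R xi i s \<omega> \<partial>M) = 0"
proof -
  have AM: "A \<in> sets M" using assms(3) Fi_subalg unfolding subalgebra_def by auto
  have eq: "(\<integral>\<omega>. indicator A \<omega> *\<^sub>R g i s \<omega> \<partial>M) = (\<integral>\<omega>. indicator A \<omega> *\<^sub>R gF i (th i s \<omega>) \<partial>M)"
    using unbiased assms unfolding Fi_def th_def Pi_def by auto
  have i1: "integrable M (\<lambda>\<omega>. indicator A \<omega> *\<^sub>R g i s \<omega>)"
    using integrable_mult_indicator[OF AM sqint_int[OF sqint_g]] assms by auto
  have i2: "integrable M (\<lambda>\<omega>. indicator A \<omega> *\<^sub>R gF i (th i s \<omega>))"
    using integrable_mult_indicator[OF AM sqint_int[OF sqint_gFth]] assms by auto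
  have "(\<integral>\<omega>. indicator A \<omega> *\<^sub>R xi i s \<omega> \<partial>M) = (\<integral>\<omega>. indicator A \<omega> *\<^sub>R g i s \<omega> - indicator A \<omega> *\<^sub>R gF i (th i s \<omega>) \<partial>M)"
    unfolding xi_def by (simp add: scaleR_diff_right)
  also have "\<dots> = 0" using eq Bochner_Integration.integral_diff[OF i1 i2] by simp
  finally show ?thesis .
qed

lemma cond_zero_comp:
  assumes "i < N" "s < \<tau>" and XF: "X \<in> borel_measurable (Fi i s)" and sX: "sqint X"
  shows "(\<integral>\<omega>. X \<omega> * xi i s \<omega> $ c \<partial>M) = 0"
proof -
  interpret S: finite_measure_subalgebra M "Fi i s"
    by (rule finite_measure_subalgebra.intro[OF _ finite_measure_subalgebra_axioms.intro[OF Fi_subalg]])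
      (use M in \<open>simp add: prob_space_def\<close>)
  define \<xi> where "\<xi> \<omega> = xi i s \<omega> $ c" for \<omega>
  have sxi: "sqint \<xi>" unfolding \<xi>_def by (rule sqint_comp[OF sqint_xi[OF assms(1,2)]])
  have ixi: "integrable M \<xi>" by (rule sqint_int[OF sxi])
  have ixiv: "integrable M (xi i s)" by (rule sqint_int[OF sqint_xi[OF assms(1,2)]])
  have ae: "AE \<omega> in M. real_cond_exp M (Fi i s) \<xi> \<omega> = 0"
  proof (rule S.real_cond_exp_charact)
    fix A assume A: "A \<in> sets (Fi i s)"
    have AM: "A \<in> sets M" using A Fi_subalg unfolding subalgebra_def by auto
    have "(\<integral>\<omega>. (indicator A \<omega> *\<^sub>R xi i s \<omega>) $ c \<partial>M) = (\<integral>\<omega>. indicator A \<omega> *\<^sub>R xi i s \<omega> \<partial>M) $ c"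
      by (rule integral_bounded_linear[OF bounded_linear_vec_nth integrable_mult_indicator[OF AM ixiv]])
    also have "\<dots> = 0" using xi_ind_zero[OF assms(1,2) A] by simp
    finally show "(\<integral>\<omega>\<in>A. \<xi> \<omega> \<partial>M) = (\<integral>\<omega>\<in>A. 0 \<partial>M)"
      unfolding set_lebesgue_integral_def \<xi>_def by simp
  next
    show "integrable M \<xi>" by (rule ixi)
  next
    show "integrable M (\<lambda>\<omega>. 0::real)" by simp
  next
    show "(\<lambda>\<omega>. 0::real) \<in> borel_measurable (Fi i s)" by simp
  qed
  have "(\<integral>\<omega>. X \<omega> * real_cond_exp M (Fi i s) \<xi> \<omega> \<partial>M) = (\<integral>\<omega>. X \<omega> * \<xi> \<omega> \<partial>M)"
  proof (rule S.real_cond_exp_intg(2))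
    show "integrable M (\<lambda>\<omega>. X \<omega> * \<xi> \<omega>)" by (rule sqint_real_mult[OF sX sxi])
    show "X \<in> borel_measurable (Fi i s)" by (rule XF)
    show "\<xi> \<in> borel_measurable M" using sxi unfolding sqint_def by blast
  qed
  moreover have "(\<integral>\<omega>. X \<omega> * real_cond_exp M (Fi i s) \<xi> \<omega> \<partial>M) = (\<integral>\<omega>. 0 \<partial>M)"
  proof (rule integral_cong_AE)
    show "(\<lambda>\<omega>. X \<omega> * real_cond_exp M (Fi i s) \<xi> \<omega>) \<in> borel_measurable M"
      using sX unfolding sqint_def by (intro borel_measurable_times borel_measurable_cond_exp2) auto
    show "(\<lambda>\<omega>. 0::real) \<in> borel_measurable M" by simp
    show "AE \<omega> in M. X \<omega> * real_cond_exp M (Fi i s) \<xi> \<omega> = 0" using ae by eventually_elim simp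
  qed
  ultimately show ?thesis unfolding \<xi>_def by simp
qed

lemma cond_zero:
  fixes X :: "'w \<Rightarrow> real^'d"
  assumes "i < N" "s < \<tau>" and XF: "X \<in> borel_measurable (Fi i s)" and sX: "sqint X"
  shows "(\<integral>\<omega>. X \<omega> \<bullet> xi i s \<omega> \<partial>M) = 0"
proof -
  have XFc: "(\<lambda>\<omega>. X \<omega> $ c) \<in> borel_measurable (Fi i s)" for c using XF by (rule meas_nth)
  have "(\<integral>\<omega>. X \<omega> \<bullet> xi i s \<omega> \<partial>M) = (\<integral>\<omega>. (\<Sum>c\<in>UNIV. X \<omega> $ c * xi i s \<omega> $ c) \<partial>M)"
    unfolding inner_vec_def by simp
  also have "\<dots> = (\<Sum>c\<in>UNIV. (\<integral>\<omega>. X \<omega> $ c * xi i s \<omega> $ c \<partial>M))"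
    by (rule Bochner_Integration.integral_sum)
      (use sqint_real_mult[OF sqint_comp[OF sX] sqint_comp[OF sqint_xi[OF assms(1,2)]]] in auto)
  also have "\<dots> = 0"
    using cond_zero_comp[OF assms(1,2) XFc sqint_comp[OF sX]] by simp
  finally show ?thesis .
qed

end


lemma norm4_le:
  fixes a b c d :: "'a::real_inner"
  shows "(norm (a + b + c + d))\<^sup>2 \<le> 4 * ((norm a)\<^sup>2 + (norm b)\<^sup>2 + (norm c)\<^sup>2 + (norm d)\<^sup>2)"
proof -
  have "(norm ((a + b) + (c + d)))\<^sup>2 \<le> 2 * (norm (a + b))\<^sup>2 + 2 * (norm (c + d))\<^sup>2" by (rule norm_add_sq_le2)
  also have "\<dots> \<le> 2 * (2 * (norm a)\<^sup>2 + 2 * (norm b)\<^sup>2) + 2 * (2 * (norm c)\<^sup>2 + 2 * (norm d)\<^sup>2)"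
    using norm_add_sq_le2[of a b] norm_add_sq_le2[of c d] by (intro add_mono mult_left_mono) auto
  finally show ?thesis by (simp add: algebra_simps)
qed

context fed
begin

lemma int_c[simp, intro]: "integrable M (\<lambda>\<omega>. a)"
  using M unfolding prob_space_def by (intro finite_measure.integrable_const) auto

lemma mu2_pos: "1 - \<mu>\<^sup>2 > 0"
proof -
  have "\<mu> * \<mu> \<le> \<mu> * 1" using mu by (intro mult_left_mono) auto
  then show ?thesis using mu by (simp add: power2_eq_square)
qed

lemma g_sq_bound:
  assumes "i < N"
  shows "(norm (g i k \<omega>))\<^sup>2 \<le> 4 * ((norm (xi i k \<omega>))\<^sup>2 + L\<^sup>2 * (norm (th i k \<omega> - \<theta>0))\<^sup>2 + \<sigma>G\<^sup>2 + (norm (gf \<theta>0))\<^sup>2)"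
proof -
  have eq: "g i k \<omega> = xi i k \<omega> + (gF i (th i k \<omega>) - gF i \<theta>0) + (gF i \<theta>0 - gf \<theta>0) + gf \<theta>0"
    unfolding xi_def by simp
  have b1: "(norm (gF i (th i k \<omega>) - gF i \<theta>0))\<^sup>2 \<le> L\<^sup>2 * (norm (th i k \<omega> - \<theta>0))\<^sup>2"
  proof -
    have "norm (gF i (th i k \<omega>) - gF i \<theta>0) \<le> L * norm (th i k \<omega> - \<theta>0)" by (rule gF_lip[OF assms])
    then have "(norm (gF i (th i k \<omega>) - gF i \<theta>0))\<^sup>2 \<le> (L * norm (th i k \<omega> - \<theta>0))\<^sup>2"
      by (intro power_mono) auto
    then show ?thesis by (simp add: power_mult_distrib)
  qed
  have b2: "(norm (gF i \<theta>0 - gf \<theta>0))\<^sup>2 \<le> \<sigma>G\<^sup>2" using heterogeneity assms by blast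
  have "(norm (g i k \<omega>))\<^sup>2 \<le> 4 * ((norm (xi i k \<omega>))\<^sup>2 + (norm (gF i (th i k \<omega>) - gF i \<theta>0))\<^sup>2 + (norm (gF i \<theta>0 - gf \<theta>0))\<^sup>2 + (norm (gf \<theta>0))\<^sup>2)"
    using norm4_le[of "xi i k \<omega>" "gF i (th i k \<omega>) - gF i \<theta>0" "gF i \<theta>0 - gf \<theta>0" "gf \<theta>0"]
    unfolding eq[symmetric] .
  also have "\<dots> \<le> 4 * ((norm (xi i k \<omega>))\<^sup>2 + L\<^sup>2 * (norm (th i k \<omega> - \<theta>0))\<^sup>2 + \<sigma>G\<^sup>2 + (norm (gf \<theta>0))\<^sup>2)"
    using b1 b2 by (intro mult_left_mono add_mono) auto
  finally show ?thesis .
qed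

lemma th_sq_bound_AE:
  "AE \<omega> in M. (norm (th i q \<omega> - \<theta>0))\<^sup>2 \<le> \<eta>\<^sup>2 * (real q)\<^sup>2 * (\<Sum>k<q. (norm (g i k \<omega>))\<^sup>2) / (1 - \<mu>\<^sup>2)"
  using AE_Pi
proof eventually_elim
  case (elim \<omega>)
  then have "\<And>k. norm (Pi \<omega> *v g i k \<omega>) \<le> norm (g i k \<omega>)" by blast
  from li_theta_bound[OF mu this] show ?case unfolding th_def .
qed

lemma xi_sq_int_le: "i < N \<Longrightarrow> s < \<tau> \<Longrightarrow> (\<integral>\<omega>. (norm (xi i s \<omega>))\<^sup>2 \<partial>M) \<le> \<sigma>L\<^sup>2"
proof -
  assume a: "i < N" "s < \<tau>"
  have "space M \<in> sets (Fi i s)" using sets.top[of "Fi i s"] by simp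
  then have sp: "space M \<in> sets (info_sigma M P g N \<tau> i s)" unfolding Fi_def .
  have "(\<integral>\<omega>. indicator (space M) \<omega> * (norm (xi i s \<omega>))\<^sup>2 \<partial>M) \<le> \<sigma>L\<^sup>2 * measure M (space M)"
    using var_bound a sp unfolding xi_sq_eq by blast
  moreover have "(\<integral>\<omega>. indicator (space M) \<omega> * (norm (xi i s \<omega>))\<^sup>2 \<partial>M) = (\<integral>\<omega>. (norm (xi i s \<omega>))\<^sup>2 \<partial>M)"
    by (rule Bochner_Integration.integral_cong) auto
  moreover have "measure M (space M) = 1" using prob_space.prob_space[OF M] .
  ultimately show ?thesis by simp
qed

definition Kb :: real where
  "Kb = 12 * \<eta>\<^sup>2 * real \<tau> ^ 3 / (1 - \<mu>\<^sup>2) * (\<sigma>L\<^sup>2 + \<sigma>G\<^sup>2 + (norm (gf \<theta>0))\<^sup>2)"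

lemma Kb_nonneg: "Kb \<ge> 0"
  unfolding Kb_def using mu2_pos by (intro mult_nonneg_nonneg divide_nonneg_pos) auto

lemma eta_sq: "4 * \<eta>\<^sup>2 * real \<tau> ^ 3 * L\<^sup>2 / (1 - \<mu>\<^sup>2) \<le> 2 / 3"
proof -
  have tp: "real \<tau> ^ 3 > 0" using tau_pos by simp
  have d: "6 * L\<^sup>2 * real \<tau> ^ 3 > 0" using L_pos tp by simp
  have "\<eta>\<^sup>2 \<le> (sqrt ((1 - \<mu>\<^sup>2) / (6 * L\<^sup>2 * real \<tau> ^ 3)))\<^sup>2"
    using eta1 eta_pos by (intro power_mono) auto
  also have "\<dots> = (1 - \<mu>\<^sup>2) / (6 * L\<^sup>2 * real \<tau> ^ 3)"
    using mu2_pos d by simp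
  finally have e: "\<eta>\<^sup>2 * (6 * L\<^sup>2 * real \<tau> ^ 3) \<le> 1 - \<mu>\<^sup>2"
    using d by (simp add: field_simps)
  show ?thesis using e mu2_pos by (simp add: field_simps)
qed

lemma sqint_thd: "i < N \<Longrightarrow> s \<le> \<tau> \<Longrightarrow> sqint (\<lambda>\<omega>. th i s \<omega> - \<theta>0)"
  by (intro sqint_minus sqint_th sqint_const)

lemma int_thd: "i < N \<Longrightarrow> s \<le> \<tau> \<Longrightarrow> integrable M (\<lambda>\<omega>. (norm (th i s \<omega> - \<theta>0))\<^sup>2)"
  using sqint_thd unfolding sqint_def by blast

lemma int_xi2: "i < N \<Longrightarrow> s < \<tau> \<Longrightarrow> integrable M (\<lambda>\<omega>. (norm (xi i s \<omega>))\<^sup>2)"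
  using sqint_xi unfolding sqint_def by blast

lemma th_drift:
  assumes i: "i < N"
  shows "q < \<tau> \<Longrightarrow> (\<integral>\<omega>. (norm (th i q \<omega> - \<theta>0))\<^sup>2 \<partial>M) \<le> Kb"
proof (induction q rule: less_induct)
  case (less q)
  define c where "c = \<eta>\<^sup>2 * (real q)\<^sup>2 / (1 - \<mu>\<^sup>2)"
  have c0: "c \<ge> 0" unfolding c_def using mu2_pos by simp
  define R where "R k \<omega> = 4 * ((norm (xi i k \<omega>))\<^sup>2 + L\<^sup>2 * (norm (th i k \<omega> - \<theta>0))\<^sup>2 + \<sigma>G\<^sup>2 + (norm (gf \<theta>0))\<^sup>2)" for k \<omega>
  have intR: "integrable M (R k)" if "k < q" for k
    unfolding R_def[abs_def] using that less.prems i
    by (intro integrable_mult_right Bochner_Integration.integrable_add int_xi2 int_thd) auto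
  have intR2: "integrable M (\<lambda>\<omega>. c * (\<Sum>k<q. R k \<omega>))"
    using intR by (intro integrable_mult_right Bochner_Integration.integrable_sum) auto
  have "(\<integral>\<omega>. (norm (th i q \<omega> - \<theta>0))\<^sup>2 \<partial>M) \<le> (\<integral>\<omega>. c * (\<Sum>k<q. R k \<omega>) \<partial>M)"
  proof (rule integral_mono_AE)
    show "integrable M (\<lambda>\<omega>. (norm (th i q \<omega> - \<theta>0))\<^sup>2)" using less.prems i by (intro int_thd) auto
    show "integrable M (\<lambda>\<omega>. c * (\<Sum>k<q. R k \<omega>))" by (rule intR2)
    show "AE \<omega> in M. (norm (th i q \<omega> - \<theta>0))\<^sup>2 \<le> c * (\<Sum>k<q. R k \<omega>)"
      using th_sq_bound_AE[of i q]
    proof eventually_elim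
      case (elim \<omega>)
      have "(\<Sum>k<q. (norm (g i k \<omega>))\<^sup>2) \<le> (\<Sum>k<q. R k \<omega>)"
        unfolding R_def by (intro sum_mono g_sq_bound[OF i])
      then have "c * (\<Sum>k<q. (norm (g i k \<omega>))\<^sup>2) \<le> c * (\<Sum>k<q. R k \<omega>)"
        using c0 by (intro mult_left_mono) auto
      then show ?case using elim unfolding c_def by simp
    qed
  qed
  also have "(\<integral>\<omega>. c * (\<Sum>k<q. R k \<omega>) \<partial>M) = c * (\<Sum>k<q. (\<integral>\<omega>. R k \<omega> \<partial>M))"
    using intR by (simp add: Bochner_Integration.integral_sum)
  also have "\<dots> \<le> c * (\<Sum>k<q. 4 * (\<sigma>L\<^sup>2 + L\<^sup>2 * Kb + \<sigma>G\<^sup>2 + (norm (gf \<theta>0))\<^sup>2))"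
  proof (intro mult_left_mono[OF _ c0] sum_mono)
    fix k assume k: "k \<in> {..<q}"
    then have kq: "k < q" "k < \<tau>" using less.prems by auto
    have "(\<integral>\<omega>. R k \<omega> \<partial>M) = 4 * ((\<integral>\<omega>. (norm (xi i k \<omega>))\<^sup>2 \<partial>M) + L\<^sup>2 * (\<integral>\<omega>. (norm (th i k \<omega> - \<theta>0))\<^sup>2 \<partial>M) + \<sigma>G\<^sup>2 + (norm (gf \<theta>0))\<^sup>2)"
      unfolding R_def using int_xi2[OF i kq(2)] int_thd[OF i, of k] kq prob_space.prob_space[OF M]
      by (simp add: Bochner_Integration.integral_add Bochner_Integration.integrable_add)
    also have "\<dots> \<le> 4 * (\<sigma>L\<^sup>2 + L\<^sup>2 * Kb + \<sigma>G\<^sup>2 + (norm (gf \<theta>0))\<^sup>2)"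
      using xi_sq_int_le[OF i kq(2)] less.IH[OF kq(1) kq(2)]
      by (intro mult_left_mono add_mono mult_left_mono) auto
    finally show "(\<integral>\<omega>. R k \<omega> \<partial>M) \<le> 4 * (\<sigma>L\<^sup>2 + L\<^sup>2 * Kb + \<sigma>G\<^sup>2 + (norm (gf \<theta>0))\<^sup>2)" .
  qed
  also have "\<dots> = (\<eta>\<^sup>2 * (real q)\<^sup>2 * real q / (1 - \<mu>\<^sup>2)) * 4 * (\<sigma>L\<^sup>2 + L\<^sup>2 * Kb + \<sigma>G\<^sup>2 + (norm (gf \<theta>0))\<^sup>2)"
    unfolding c_def by simp
  also have "\<dots> \<le> (\<eta>\<^sup>2 * real \<tau> ^ 3 / (1 - \<mu>\<^sup>2)) * 4 * (\<sigma>L\<^sup>2 + L\<^sup>2 * Kb + \<sigma>G\<^sup>2 + (norm (gf \<theta>0))\<^sup>2)"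
  proof -
    have "(real q)\<^sup>2 * real q \<le> real \<tau> ^ 3"
    proof -
      have "(real q)\<^sup>2 * real q = real q ^ 3" by (simp add: power2_eq_square power3_eq_cube)
      also have "\<dots> \<le> real \<tau> ^ 3" using less.prems by (intro power_mono) auto
      finally show ?thesis .
    qed
    then have "\<eta>\<^sup>2 * (real q)\<^sup>2 * real q / (1 - \<mu>\<^sup>2) \<le> \<eta>\<^sup>2 * real \<tau> ^ 3 / (1 - \<mu>\<^sup>2)"
      using mu2_pos by (simp add: divide_right_mono mult.assoc mult_left_mono)
    moreover have "0 \<le> (\<sigma>L\<^sup>2 + L\<^sup>2 * Kb + \<sigma>G\<^sup>2 + (norm (gf \<theta>0))\<^sup>2)" using Kb_nonneg by simp
    ultimately show ?thesis by (intro mult_right_mono) auto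
  qed
  also have "\<dots> = (4 * \<eta>\<^sup>2 * real \<tau> ^ 3 * L\<^sup>2 / (1 - \<mu>\<^sup>2)) * Kb + Kb / 3"
  proof -
    define cc where "cc = \<eta>\<^sup>2 * real \<tau> ^ 3 / (1 - \<mu>\<^sup>2)"
    have K: "Kb = 12 * cc * (\<sigma>L\<^sup>2 + \<sigma>G\<^sup>2 + (norm (gf \<theta>0))\<^sup>2)" unfolding Kb_def cc_def by simp
    have c4: "4 * \<eta>\<^sup>2 * real \<tau> ^ 3 * L\<^sup>2 / (1 - \<mu>\<^sup>2) = 4 * cc * L\<^sup>2" unfolding cc_def by simp
    show ?thesis unfolding c4 cc_def[symmetric] unfolding K by (simp add: algebra_simps)
  qed
  also have "\<dots> \<le> 2 / 3 * Kb + Kb / 3"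
    using eta_sq Kb_nonneg by (intro add_mono mult_right_mono) auto
  also have "\<dots> = Kb" by simp
  finally show ?case .
qed

end


lemma two_inner_le:
  fixes x y :: "'a::real_inner"
  shows "2 * (x \<bullet> y) \<le> (norm x)\<^sup>2 + (norm y)\<^sup>2"
proof -
  have "0 \<le> (x - y) \<bullet> (x - y)" by simp
  also have "(x - y) \<bullet> (x - y) = x \<bullet> x - 2 * (x \<bullet> y) + y \<bullet> y"
    by (simp add: inner_diff_left inner_diff_right inner_commute)
  finally show ?thesis unfolding power2_norm_eq_inner by simp
qed

lemma key_ineq:
  fixes Pm :: "real^'d^'d" and G Ab b :: "real^'d"
  assumes sym: "\<And>x y. (Pm *v x) \<bullet> y = x \<bullet> (Pm *v y)"
    and idem: "\<And>x y. (Pm *v x) \<bullet> (Pm *v y) = x \<bullet> (Pm *v y)"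
    and contr: "\<And>x. norm (Pm *v x) \<le> norm x"
    and S: "S > 0" and eta: "\<eta> > 0" and L: "L > 0" and LS: "L * \<eta> * S \<le> 1"
  shows "G \<bullet> (- \<eta> *\<^sub>R (Pm *v (S *\<^sub>R Ab + b))) + L / 2 * (norm (- \<eta> *\<^sub>R (Pm *v (S *\<^sub>R Ab + b))))\<^sup>2
    \<le> - (\<eta> * S / 2) * (G \<bullet> (Pm *v G)) + \<eta> * S * (norm (Ab - G))\<^sup>2
       + (L * \<eta>\<^sup>2 * S - \<eta>) * ((Pm *v G) \<bullet> b) + L * \<eta>\<^sup>2 * (norm b)\<^sup>2"
proof -
  define pG where "pG = Pm *v G"
  define pA where "pA = Pm *v Ab"
  define pb where "pb = Pm *v b"
  define pD where "pD = Pm *v (Ab - G)"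
  have pD_eq: "pD = pA - pG" unfolding pD_def pA_def pG_def by (simp add: matrix_vector_mult_diff_distrib)
  define x1 where "x1 = (norm pG)\<^sup>2"
  define x2 where "x2 = (norm pA)\<^sup>2"
  define x3 where "x3 = (norm pD)\<^sup>2"
  define x4 where "x4 = pG \<bullet> b"
  define x5 where "x5 = pD \<bullet> pb"
  define x6 where "x6 = (norm pb)\<^sup>2"
  define x7 where "x7 = (norm (Ab - G))\<^sup>2"
  define x8 where "x8 = (norm b)\<^sup>2"
  have GpA: "G \<bullet> (Pm *v Ab) = pG \<bullet> pA" unfolding pG_def pA_def by (simp add: idem)
  have Gpb: "G \<bullet> (Pm *v b) = x4" unfolding x4_def pG_def by (simp add: sym)
  have pGpb: "pG \<bullet> pb = x4" unfolding pG_def pb_def idem using Gpb .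
  have x1G: "x1 = G \<bullet> (Pm *v G)" unfolding x1_def pG_def by (simp add: power2_norm_eq_inner idem)
  have pol: "2 * (pG \<bullet> pA) = x1 + x2 - x3"
    unfolding x1_def x2_def x3_def pD_eq
    by (simp add: power2_norm_eq_inner inner_diff_left inner_diff_right inner_commute algebra_simps)
  have Pab: "Pm *v (S *\<^sub>R Ab + b) = S *\<^sub>R pA + pb"
    unfolding pA_def pb_def by (simp add: matrix_vector_right_distrib matrix_vector_mult_scaleR)
  have nrm: "(norm (S *\<^sub>R pA + pb))\<^sup>2 = S\<^sup>2 * x2 + 2 * S * (x4 + x5) + x6"
  proof -
    have "pA \<bullet> pb = x4 + x5" unfolding pD_eq x5_def using pGpb
      by (simp add: inner_diff_left)
    moreover have "(norm (S *\<^sub>R pA + pb))\<^sup>2 = S\<^sup>2 * (pA \<bullet> pA) + 2 * S * (pA \<bullet> pb) + pb \<bullet> pb"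
      unfolding power2_norm_eq_inner by (simp add: inner_add_left inner_add_right inner_commute algebra_simps power2_eq_square)
    ultimately show ?thesis unfolding x2_def x6_def power2_norm_eq_inner by simp
  qed
  have lhs: "G \<bullet> (- \<eta> *\<^sub>R (Pm *v (S *\<^sub>R Ab + b))) + L / 2 * (norm (- \<eta> *\<^sub>R (Pm *v (S *\<^sub>R Ab + b))))\<^sup>2
      = - \<eta> * S * (pG \<bullet> pA) - \<eta> * x4 + L * \<eta>\<^sup>2 / 2 * (S\<^sup>2 * x2 + 2 * S * (x4 + x5) + x6)"
  proof -
    have "G \<bullet> (- \<eta> *\<^sub>R (Pm *v (S *\<^sub>R Ab + b))) = - \<eta> * S * (pG \<bullet> pA) - \<eta> * x4"
      unfolding Pab pA_def[symmetric] using GpA Gpb unfolding pA_def pb_def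
      by (simp add: inner_add_right algebra_simps)
    moreover have "(norm (- \<eta> *\<^sub>R (Pm *v (S *\<^sub>R Ab + b))))\<^sup>2 = \<eta>\<^sup>2 * (S\<^sup>2 * x2 + 2 * S * (x4 + x5) + x6)"
      unfolding Pab using nrm eta by (simp add: power_mult_distrib)
    ultimately show ?thesis by simp
  qed
  have i3: "2 * S * x5 \<le> S\<^sup>2 * x3 + x6"
  proof -
    have "2 * ((S *\<^sub>R pD) \<bullet> pb) \<le> (norm (S *\<^sub>R pD))\<^sup>2 + (norm pb)\<^sup>2"
      by (rule two_inner_le)
    then show ?thesis unfolding x3_def x5_def x6_def using S
    proof -
      assume h: "2 * ((S *\<^sub>R pD) \<bullet> pb) \<le> (norm (S *\<^sub>R pD))\<^sup>2 + (norm pb)\<^sup>2"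
      have "(norm (S *\<^sub>R pD))\<^sup>2 = S\<^sup>2 * (norm pD)\<^sup>2" by (simp add: power_mult_distrib)
      moreover have "(S *\<^sub>R pD) \<bullet> pb = S * (pD \<bullet> pb)" by simp
      ultimately show "2 * S * (pD \<bullet> pb) \<le> S\<^sup>2 * (norm pD)\<^sup>2 + (norm pb)\<^sup>2" using h by simp
    qed
  qed
  have x3x7: "x3 \<le> x7" unfolding x3_def x7_def pD_def using contr[of "Ab - G"] by (intro power_mono) auto
  have x6x8: "x6 \<le> x8" unfolding x6_def x8_def pb_def using contr[of b] by (intro power_mono) auto
  have x2nn: "x2 \<ge> 0" unfolding x2_def by simp
  have x3nn: "x3 \<ge> 0" unfolding x3_def by simp
  have c0: "L * \<eta>\<^sup>2 * S\<^sup>2 \<le> \<eta> * S"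
  proof -
    have "(L * \<eta> * S) * (\<eta> * S) \<le> 1 * (\<eta> * S)" using LS eta S by (intro mult_right_mono) auto
    then show ?thesis by (simp add: power2_eq_square algebra_simps)
  qed
  have p1: "(L * \<eta>\<^sup>2 / 2) * (2 * S * x5) \<le> (L * \<eta>\<^sup>2 / 2) * (S\<^sup>2 * x3 + x6)"
    using i3 L by (intro mult_left_mono) auto
  have p2: "(L * \<eta>\<^sup>2 * S\<^sup>2 - \<eta> * S) * x2 \<le> 0"
    using c0 x2nn by (intro mult_nonpos_nonneg) auto
  have p3: "(L * \<eta>\<^sup>2 * S\<^sup>2) * x3 \<le> (\<eta> * S) * x3"
    using c0 x3nn by (intro mult_right_mono) auto
  have p4: "(\<eta> * S) * x3 \<le> (\<eta> * S) * x7"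
    using x3x7 eta S by (intro mult_left_mono) auto
  have p5: "(L * \<eta>\<^sup>2) * x6 \<le> (L * \<eta>\<^sup>2) * x8"
    using x6x8 L by (intro mult_left_mono) auto
  define A where "A = (L * \<eta>\<^sup>2 / 2) * (2 * S * x5)"
  define B3 where "B3 = (L * \<eta>\<^sup>2 * S\<^sup>2) * x3"
  define B6 where "B6 = (L * \<eta>\<^sup>2) * x6"
  define C2 where "C2 = (L * \<eta>\<^sup>2 * S\<^sup>2 - \<eta> * S) * x2"
  define E3 where "E3 = (\<eta> * S) * x3"
  define E7 where "E7 = (\<eta> * S) * x7"
  define F8 where "F8 = (L * \<eta>\<^sup>2) * x8"
  have q1: "A \<le> B3 / 2 + B6 / 2"
  proof -
    have "(L * \<eta>\<^sup>2 / 2) * (S\<^sup>2 * x3 + x6) = B3 / 2 + B6 / 2"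
      unfolding B3_def B6_def by (simp add: algebra_simps)
    then show ?thesis using p1 unfolding A_def by simp
  qed
  have q2: "C2 \<le> 0" using p2 unfolding C2_def .
  have q3: "B3 \<le> E3" using p3 unfolding B3_def E3_def .
  have q4: "E3 \<le> E7" using p4 unfolding E3_def E7_def .
  have q5: "B6 \<le> F8" using p5 unfolding B6_def F8_def .
  have "- \<eta> * S * (pG \<bullet> pA) - \<eta> * x4 + L * \<eta>\<^sup>2 / 2 * (S\<^sup>2 * x2 + 2 * S * (x4 + x5) + x6)
      = - (\<eta> * S / 2) * x1 + C2 / 2 + E3 / 2 + (L * \<eta>\<^sup>2 * S - \<eta>) * x4 + A + B6 / 2"
  proof -
    have pol': "pG \<bullet> pA = (x1 + x2 - x3) / 2" using pol by simp
    show ?thesis unfolding pol' C2_def E3_def A_def B6_def by (simp add: field_simps)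
  qed
  also have "\<dots> \<le> - (\<eta> * S / 2) * x1 + E7 + (L * \<eta>\<^sup>2 * S - \<eta>) * x4 + F8"
    using q1 q2 q3 q4 q5 by linarith
  also have "\<dots> = - (\<eta> * S / 2) * x1 + (\<eta> * S) * x7 + (L * \<eta>\<^sup>2 * S - \<eta>) * x4 + (L * \<eta>\<^sup>2) * x8"
    unfolding E7_def F8_def ..
  finally show ?thesis unfolding lhs x1G x7_def x8_def x4_def pG_def .
qed


context fed
begin

definition al :: "nat \<Rightarrow> real" where "al q = alpha_w \<mu> \<tau> q"
definition SS :: real where "SS = S_tau \<mu> \<tau>"
definition Bv :: "'w \<Rightarrow> real^'d" where
  "Bv \<omega> = (1 / real N) *\<^sub>R (\<Sum>i<N. \<Sum>q<\<tau>. al q *\<^sub>R xi i q \<omega>)"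
definition Ab :: "'w \<Rightarrow> real^'d" where
  "Ab \<omega> = (1 / (real N * SS)) *\<^sub>R (\<Sum>i<N. \<Sum>q<\<tau>. al q *\<^sub>R gF i (th i q \<omega>))"
definition thn :: "'w \<Rightarrow> real^'d" where
  "thn \<omega> = \<theta>0 + (1 / real N) *\<^sub>R (\<Sum>i<N. th i \<tau> \<omega> - \<theta>0)"

lemma SS_pos: "SS > 0" unfolding SS_def using S_tau_pos[OF mu tau_pos] .
lemma SS_sum: "(\<Sum>q<\<tau>. al q) = SS" unfolding SS_def S_tau_def al_def ..
lemma al_nonneg: "al q \<ge> 0" unfolding al_def using alpha_w_nonneg[OF mu] .
lemma N_gt0: "real N > 0" using N_pos by simp

lemma LS_le: "L * \<eta> * SS \<le> 1"
proof -
  have "\<eta> * (L * SS) \<le> 1 / (L * SS) * (L * SS)"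
    using eta2 L_pos SS_pos unfolding SS_def by (intro mult_right_mono) auto
  then show ?thesis using L_pos SS_pos by (simp add: algebra_simps)
qed

lemma th_tau: "th i \<tau> \<omega> - \<theta>0 = - \<eta> *\<^sub>R (\<Sum>q<\<tau>. al q *\<^sub>R (Pi \<omega> *v g i q \<omega>))"
  unfolding th_def li_theta_alpha[OF mu(2)] al_def by simp

lemma thn_eq: "thn \<omega> - \<theta>0 = - \<eta> *\<^sub>R (Pi \<omega> *v (SS *\<^sub>R Ab \<omega> + Bv \<omega>))"
proof -
  define Sx where "Sx = (\<Sum>i<N. \<Sum>q<\<tau>. al q *\<^sub>R xi i q \<omega>)"
  define Sg where "Sg = (\<Sum>i<N. \<Sum>q<\<tau>. al q *\<^sub>R gF i (th i q \<omega>))"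
  have "Sx + Sg = (\<Sum>i<N. \<Sum>q<\<tau>. al q *\<^sub>R g i q \<omega>)"
    unfolding Sx_def Sg_def xi_def by (simp add: sum.distrib[symmetric] scaleR_add_right[symmetric])
  then have PS: "Pi \<omega> *v (Sx + Sg) = (\<Sum>i<N. \<Sum>q<\<tau>. al q *\<^sub>R (Pi \<omega> *v g i q \<omega>))"
    by (simp add: vec.sum matrix_vector_mult_scaleR)
  have "(\<Sum>i<N. th i \<tau> \<omega> - \<theta>0) = - \<eta> *\<^sub>R (Pi \<omega> *v (Sx + Sg))"
    unfolding PS th_tau by (simp add: scaleR_sum_right)
  moreover have "SS *\<^sub>R Ab \<omega> + Bv \<omega> = (1 / real N) *\<^sub>R (Sx + Sg)"
    unfolding Ab_def Bv_def Sx_def Sg_def using SS_pos N_gt0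
    by (simp add: scaleR_add_right algebra_simps)
  ultimately show ?thesis
    unfolding thn_def by (simp add: matrix_vector_mult_scaleR)
qed

lemma Ab_bound:
  "(norm (Ab \<omega> - gf \<theta>0))\<^sup>2 \<le> L\<^sup>2 / (real N * SS) * (\<Sum>i<N. \<Sum>q<\<tau>. al q * (norm (th i q \<omega> - \<theta>0))\<^sup>2)"
proof -
  define z where "z i q = gF i (th i q \<omega>) - gF i \<theta>0" for i q
  define y where "y i = (\<Sum>q<\<tau>. (al q / SS) *\<^sub>R z i q)" for i
  have eq: "Ab \<omega> - gf \<theta>0 = (\<Sum>i<N. (1 / real N) *\<^sub>R y i)"
  proof -
    have a: "(\<Sum>q<\<tau>. al q *\<^sub>R gF i \<theta>0) = SS *\<^sub>R gF i \<theta>0" for i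
      using SS_sum by (simp add: scaleR_sum_left[symmetric])
    have "(\<Sum>i<N. (1 / real N) *\<^sub>R y i) = (1 / (real N * SS)) *\<^sub>R (\<Sum>i<N. \<Sum>q<\<tau>. al q *\<^sub>R z i q)"
      unfolding y_def using SS_pos by (simp add: scaleR_sum_right)
    also have "(\<Sum>i<N. \<Sum>q<\<tau>. al q *\<^sub>R z i q) = (\<Sum>i<N. \<Sum>q<\<tau>. al q *\<^sub>R gF i (th i q \<omega>)) - (\<Sum>i<N. SS *\<^sub>R gF i \<theta>0)"
      unfolding z_def a[symmetric] by (simp add: scaleR_diff_right sum_subtractf)
    finally show ?thesis
      unfolding Ab_def gf_def using SS_pos
      by (simp add: scaleR_diff_right scaleR_sum_right[symmetric])
  qed
  have yb: "(norm (y i))\<^sup>2 \<le> L\<^sup>2 / SS * (\<Sum>q<\<tau>. al q * (norm (th i q \<omega> - \<theta>0))\<^sup>2)" if i: "i < N" for i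
  proof -
    have "(norm (y i))\<^sup>2 \<le> (\<Sum>q<\<tau>. al q / SS) * (\<Sum>q<\<tau>. al q / SS * (norm (z i q))\<^sup>2)"
      unfolding y_def using al_nonneg SS_pos by (intro norm_sum_sq_weighted) auto
    also have "(\<Sum>q<\<tau>. al q / SS) = 1" using SS_sum SS_pos by (simp add: sum_divide_distrib[symmetric])
    also have "(\<Sum>q<\<tau>. al q / SS * (norm (z i q))\<^sup>2) \<le> (\<Sum>q<\<tau>. al q / SS * (L\<^sup>2 * (norm (th i q \<omega> - \<theta>0))\<^sup>2))"
    proof (intro sum_mono mult_left_mono)
      fix q
      have "norm (z i q) \<le> L * norm (th i q \<omega> - \<theta>0)" unfolding z_def by (rule gF_lip[OF i])
      then have "(norm (z i q))\<^sup>2 \<le> (L * norm (th i q \<omega> - \<theta>0))\<^sup>2" by (intro power_mono) auto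
      then show "(norm (z i q))\<^sup>2 \<le> L\<^sup>2 * (norm (th i q \<omega> - \<theta>0))\<^sup>2" by (simp add: power_mult_distrib)
      show "0 \<le> al q / SS" using al_nonneg SS_pos by simp
    qed
    also have "(\<Sum>q<\<tau>. al q / SS * (L\<^sup>2 * (norm (th i q \<omega> - \<theta>0))\<^sup>2)) = L\<^sup>2 / SS * (\<Sum>q<\<tau>. al q * (norm (th i q \<omega> - \<theta>0))\<^sup>2)"
      by (simp add: sum_distrib_left algebra_simps)
    finally show ?thesis by simp
  qed
  have "(norm (Ab \<omega> - gf \<theta>0))\<^sup>2 \<le> (\<Sum>i<N. 1 / real N) * (\<Sum>i<N. 1 / real N * (norm (y i))\<^sup>2)"
    unfolding eq using N_gt0 by (intro norm_sum_sq_weighted) auto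
  also have "(\<Sum>i<N. 1 / real N) = 1" using N_gt0 by simp
  also have "(\<Sum>i<N. 1 / real N * (norm (y i))\<^sup>2) \<le> (\<Sum>i<N. 1 / real N * (L\<^sup>2 / SS * (\<Sum>q<\<tau>. al q * (norm (th i q \<omega> - \<theta>0))\<^sup>2)))"
    using yb N_gt0 by (intro sum_mono mult_left_mono) auto
  also have "\<dots> = L\<^sup>2 / (real N * SS) * (\<Sum>i<N. \<Sum>q<\<tau>. al q * (norm (th i q \<omega> - \<theta>0))\<^sup>2)"
    by (simp add: sum_distrib_left algebra_simps)
  finally show ?thesis by simp
qed

definition Dsum :: "'w \<Rightarrow> real" where
  "Dsum \<omega> = (\<Sum>i<N. \<Sum>q<\<tau>. al q * (norm (th i q \<omega> - \<theta>0))\<^sup>2)"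

lemma pointwise_AE:
  "AE \<omega> in M. f (thn \<omega>) \<le> f \<theta>0 - (\<eta> * SS / 2) * (gf \<theta>0 \<bullet> (Pi \<omega> *v gf \<theta>0))
      + \<eta> * L\<^sup>2 / real N * Dsum \<omega>
      + (L * \<eta>\<^sup>2 * SS - \<eta>) * ((Pi \<omega> *v gf \<theta>0) \<bullet> Bv \<omega>) + L * \<eta>\<^sup>2 * (norm (Bv \<omega>))\<^sup>2"
  using AE_Pi
proof eventually_elim
  case (elim \<omega>)
  define u where "u = thn \<omega> - \<theta>0"
  have h1: "f (thn \<omega>) \<le> f \<theta>0 + gf \<theta>0 \<bullet> u + L / 2 * (norm u)\<^sup>2"
    using smooth_upper[OF f_smooth, of \<theta>0 u] unfolding u_def by simp
  have h2: "gf \<theta>0 \<bullet> u + L / 2 * (norm u)\<^sup>2 \<le> - (\<eta> * SS / 2) * (gf \<theta>0 \<bullet> (Pi \<omega> *v gf \<theta>0)) + \<eta> * SS * (norm (Ab \<omega> - gf \<theta>0))\<^sup>2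
       + (L * \<eta>\<^sup>2 * SS - \<eta>) * ((Pi \<omega> *v gf \<theta>0) \<bullet> Bv \<omega>) + L * \<eta>\<^sup>2 * (norm (Bv \<omega>))\<^sup>2"
    unfolding u_def thn_eq
    by (rule key_ineq) (use elim SS_pos eta_pos L_pos LS_le in auto)
  have h3: "\<eta> * SS * (norm (Ab \<omega> - gf \<theta>0))\<^sup>2 \<le> \<eta> * SS * (L\<^sup>2 / (real N * SS) * Dsum \<omega>)"
    unfolding Dsum_def using Ab_bound eta_pos SS_pos by (intro mult_left_mono) auto
  have h4: "\<eta> * SS * (L\<^sup>2 / (real N * SS) * Dsum \<omega>) = \<eta> * L\<^sup>2 / real N * Dsum \<omega>"
    using SS_pos N_gt0 by (simp add: field_simps)
  show ?case using h1 h2 h3 h4 by linarith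
qed

end


context fed
begin

lemma int_dsum:
  fixes h :: "nat \<Rightarrow> nat \<Rightarrow> 'w \<Rightarrow> real"
  assumes "\<And>i q. i \<in> A \<Longrightarrow> q \<in> B \<Longrightarrow> integrable M (h i q)"
  shows "integrable M (\<lambda>\<omega>. \<Sum>i\<in>A. \<Sum>q\<in>B. c i q * h i q \<omega>)"
    "(\<integral>\<omega>. (\<Sum>i\<in>A. \<Sum>q\<in>B. c i q * h i q \<omega>) \<partial>M) = (\<Sum>i\<in>A. \<Sum>q\<in>B. c i q * (\<integral>\<omega>. h i q \<omega> \<partial>M))"
proof -
  have i1: "integrable M (\<lambda>\<omega>. c i q * h i q \<omega>)" if "i \<in> A" "q \<in> B" for i q
    using assms[OF that] by (rule integrable_mult_right)
  have i2: "integrable M (\<lambda>\<omega>. \<Sum>q\<in>B. c i q * h i q \<omega>)" if "i \<in> A" for i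
    using i1 that by (intro Bochner_Integration.integrable_sum) auto
  show "integrable M (\<lambda>\<omega>. \<Sum>i\<in>A. \<Sum>q\<in>B. c i q * h i q \<omega>)"
    by (rule Bochner_Integration.integrable_sum) (rule i2)
  have "(\<integral>\<omega>. (\<Sum>i\<in>A. \<Sum>q\<in>B. c i q * h i q \<omega>) \<partial>M) = (\<Sum>i\<in>A. (\<integral>\<omega>. (\<Sum>q\<in>B. c i q * h i q \<omega>) \<partial>M))"
    by (rule Bochner_Integration.integral_sum) (rule i2)
  also have "\<dots> = (\<Sum>i\<in>A. \<Sum>q\<in>B. (\<integral>\<omega>. c i q * h i q \<omega> \<partial>M))"
    by (intro sum.cong refl Bochner_Integration.integral_sum i1)
  also have "\<dots> = (\<Sum>i\<in>A. \<Sum>q\<in>B. c i q * (\<integral>\<omega>. h i q \<omega> \<partial>M))"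
    by (intro sum.cong refl integral_mult_right_zero)
  finally show "(\<integral>\<omega>. (\<Sum>i\<in>A. \<Sum>q\<in>B. c i q * h i q \<omega>) \<partial>M) = (\<Sum>i\<in>A. \<Sum>q\<in>B. c i q * (\<integral>\<omega>. h i q \<omega> \<partial>M))" .
qed

lemma E_haar:
  "integrable M (\<lambda>\<omega>. gf \<theta>0 \<bullet> (Pi \<omega> *v gf \<theta>0))"
  "(\<integral>\<omega>. gf \<theta>0 \<bullet> (Pi \<omega> *v gf \<theta>0) \<partial>M) = real CARD('r) / real CARD('d) * (norm (gf \<theta>0))\<^sup>2"
proof -
  define h where "h Q = gf \<theta>0 \<bullet> ((Q ** transpose Q) *v gf \<theta>0)" for Q :: "real^'r^'d"
  have hc: "continuous_on UNIV h"
    unfolding h_def matrix_vector_mult_def matrix_matrix_mult_def transpose_def inner_vec_def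
    by (intro continuous_intros)
  have hb: "h \<in> borel_measurable borel" by (rule borel_measurable_continuous_onI[OF hc])
  have eqf: "(\<lambda>\<omega>. gf \<theta>0 \<bullet> (Pi \<omega> *v gf \<theta>0)) = (\<lambda>\<omega>. h (P \<omega>))"
    unfolding h_def Pi_def ..
  have "integrable (distr M borel P) h" unfolding h_def by (rule haar_quad(1)[OF P_haar])
  then show "integrable M (\<lambda>\<omega>. gf \<theta>0 \<bullet> (Pi \<omega> *v gf \<theta>0))"
    unfolding eqf using integrable_distr_eq[OF P_meas hb] by simp
  have "(\<integral>\<omega>. h (P \<omega>) \<partial>M) = (\<integral>Q. h Q \<partial>(distr M borel P))"
    by (rule integral_distr[OF P_meas hb, symmetric])
  also have "\<dots> = real CARD('r) / real CARD('d) * (norm (gf \<theta>0))\<^sup>2"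
    unfolding h_def by (rule haar_quad(2)[OF P_haar])
  finally show "(\<integral>\<omega>. gf \<theta>0 \<bullet> (Pi \<omega> *v gf \<theta>0) \<partial>M) = real CARD('r) / real CARD('d) * (norm (gf \<theta>0))\<^sup>2"
    unfolding eqf .
qed

lemma sqint_PiG: "sqint (\<lambda>\<omega>. Pi \<omega> *v v)"
  by (rule sqint_Pi[OF sqint_const])

lemma PiG_Fi: "(\<lambda>\<omega>. Pi \<omega> *v v) \<in> borel_measurable (Fi i s)"
  by (intro meas_mvmult Pi_meas_gen[OF P_Fi]) simp

lemma Bv_inner_expand:
  "Y \<bullet> Bv \<omega> = (1 / real N) * (\<Sum>i<N. \<Sum>q<\<tau>. al q * (Y \<bullet> xi i q \<omega>))"
  unfolding Bv_def by (simp add: inner_sum_right)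

lemma E_cross:
  "integrable M (\<lambda>\<omega>. (Pi \<omega> *v gf \<theta>0) \<bullet> Bv \<omega>)"
  "(\<integral>\<omega>. (Pi \<omega> *v gf \<theta>0) \<bullet> Bv \<omega> \<partial>M) = 0"
proof -
  have ii: "integrable M (\<lambda>\<omega>. (Pi \<omega> *v gf \<theta>0) \<bullet> xi i q \<omega>)" if "i < N" "q < \<tau>" for i q
    by (rule sqint_inner[OF sqint_PiG sqint_xi[OF that]])
  show "integrable M (\<lambda>\<omega>. (Pi \<omega> *v gf \<theta>0) \<bullet> Bv \<omega>)"
    unfolding Bv_inner_expand using int_dsum(1)[of "{..<N}" "{..<\<tau>}" "\<lambda>i q \<omega>. (Pi \<omega> *v gf \<theta>0) \<bullet> xi i q \<omega>" "\<lambda>i q. al q"] ii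
    by (intro integrable_mult_right) auto
  have z: "(\<integral>\<omega>. (Pi \<omega> *v gf \<theta>0) \<bullet> xi i q \<omega> \<partial>M) = 0" if "i < N" "q < \<tau>" for i q
    by (rule cond_zero[OF that PiG_Fi sqint_PiG])
  have "(\<integral>\<omega>. (Pi \<omega> *v gf \<theta>0) \<bullet> Bv \<omega> \<partial>M)
      = (1 / real N) * (\<Sum>i<N. \<Sum>q<\<tau>. al q * (\<integral>\<omega>. (Pi \<omega> *v gf \<theta>0) \<bullet> xi i q \<omega> \<partial>M))"
    unfolding Bv_inner_expand using int_dsum(2)[of "{..<N}" "{..<\<tau>}" "\<lambda>i q \<omega>. (Pi \<omega> *v gf \<theta>0) \<bullet> xi i q \<omega>" "\<lambda>i q. al q"] ii
    by simp
  also have "\<dots> = 0" using z by simp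
  finally show "(\<integral>\<omega>. (Pi \<omega> *v gf \<theta>0) \<bullet> Bv \<omega> \<partial>M) = 0" .
qed

lemma xi_orth:
  assumes "i < N" "j < N" "q < \<tau>" "k < \<tau>" "\<not> (i = j \<and> q = k)"
  shows "(\<integral>\<omega>. xi i q \<omega> \<bullet> xi j k \<omega> \<partial>M) = 0"
proof (cases "j \<noteq> i \<or> k < q")
  case True
  have "(\<integral>\<omega>. xi j k \<omega> \<bullet> xi i q \<omega> \<partial>M) = 0"
    by (rule cond_zero[OF assms(1,3) xi_Fi[OF assms(1,2,4) True] sqint_xi[OF assms(2,4)]])
  then show ?thesis by (simp add: inner_commute)
next
  case False
  then have "j = i" "q < k" using assms(5) by auto
  then show ?thesis
    using cond_zero[OF assms(2,4) xi_Fi[OF assms(2,1,3)] sqint_xi[OF assms(1,3)]] by simp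
qed

lemma al_le_SS: "q < \<tau> \<Longrightarrow> al q \<le> SS"
  unfolding SS_sum[symmetric] using al_nonneg by (intro member_le_sum) auto

lemma sqint_Bv: "sqint Bv"
  unfolding Bv_def[abs_def] using sqint_xi
  by (intro sqint_scale sqint_sum) auto

lemma E_B:
  "integrable M (\<lambda>\<omega>. (norm (Bv \<omega>))\<^sup>2)"
  "(\<integral>\<omega>. (norm (Bv \<omega>))\<^sup>2 \<partial>M) \<le> \<sigma>L\<^sup>2 * SS\<^sup>2 / real N"
proof -
  show "integrable M (\<lambda>\<omega>. (norm (Bv \<omega>))\<^sup>2)" using sqint_Bv unfolding sqint_def by blast
  have ii: "integrable M (\<lambda>\<omega>. xi i q \<omega> \<bullet> xi j k \<omega>)" if "i < N" "q < \<tau>" "j < N" "k < \<tau>" for i q j k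
    by (rule sqint_inner[OF sqint_xi[OF that(1,2)] sqint_xi[OF that(3,4)]])
  have ih: "integrable M (\<lambda>\<omega>. xi i q \<omega> \<bullet> Bv \<omega>)" if "i < N" "q < \<tau>" for i q
    by (rule sqint_inner[OF sqint_xi[OF that] sqint_Bv])
  have expand: "(norm (Bv \<omega>))\<^sup>2 = (1 / real N) * (\<Sum>i<N. \<Sum>q<\<tau>. al q * (xi i q \<omega> \<bullet> Bv \<omega>))" for \<omega>
    unfolding power2_norm_eq_inner Bv_inner_expand[of "Bv \<omega>"] by (simp add: inner_commute)
  have hint: "(\<integral>\<omega>. xi i q \<omega> \<bullet> Bv \<omega> \<partial>M) = (1 / real N) * (al q * (\<integral>\<omega>. xi i q \<omega> \<bullet> xi i q \<omega> \<partial>M))"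
    if iq: "i < N" "q < \<tau>" for i q
  proof -
    have "(\<integral>\<omega>. xi i q \<omega> \<bullet> Bv \<omega> \<partial>M) = (1 / real N) * (\<Sum>j<N. \<Sum>k<\<tau>. al k * (\<integral>\<omega>. xi i q \<omega> \<bullet> xi j k \<omega> \<partial>M))"
      unfolding Bv_inner_expand
      using int_dsum(2)[of "{..<N}" "{..<\<tau>}" "\<lambda>j k \<omega>. xi i q \<omega> \<bullet> xi j k \<omega>" "\<lambda>j k. al k"] ii iq by simp
    also have "(\<Sum>j<N. \<Sum>k<\<tau>. al k * (\<integral>\<omega>. xi i q \<omega> \<bullet> xi j k \<omega> \<partial>M))
          = (\<Sum>j<N. if j = i then al q * (\<integral>\<omega>. xi i q \<omega> \<bullet> xi i q \<omega> \<partial>M) else 0)"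
    proof (intro sum.cong refl)
      fix j assume j: "j \<in> {..<N}"
      show "(\<Sum>k<\<tau>. al k * (\<integral>\<omega>. xi i q \<omega> \<bullet> xi j k \<omega> \<partial>M)) = (if j = i then al q * (\<integral>\<omega>. xi i q \<omega> \<bullet> xi i q \<omega> \<partial>M) else 0)"
      proof (cases "j = i")
        case True
        have "(\<Sum>k<\<tau>. al k * (\<integral>\<omega>. xi i q \<omega> \<bullet> xi j k \<omega> \<partial>M)) = (\<Sum>k<\<tau>. if k = q then al q * (\<integral>\<omega>. xi i q \<omega> \<bullet> xi i q \<omega> \<partial>M) else 0)"
        proof (intro sum.cong refl)
          fix k assume k: "k \<in> {..<\<tau>}"
          show "al k * (\<integral>\<omega>. xi i q \<omega> \<bullet> xi j k \<omega> \<partial>M) = (if k = q then al q * (\<integral>\<omega>. xi i q \<omega> \<bullet> xi i q \<omega> \<partial>M) else 0)"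
            using xi_orth[of i j q k] True iq k by auto
        qed
        also have "\<dots> = al q * (\<integral>\<omega>. xi i q \<omega> \<bullet> xi i q \<omega> \<partial>M)" using iq by simp
        finally show ?thesis using True by simp
      next
        case False
        then show ?thesis using xi_orth[of i j q] iq j by simp
      qed
    qed
    also have "\<dots> = al q * (\<integral>\<omega>. xi i q \<omega> \<bullet> xi i q \<omega> \<partial>M)"
      using iq by simp
    finally show ?thesis .
  qed
  have "(\<integral>\<omega>. (norm (Bv \<omega>))\<^sup>2 \<partial>M) = (1 / real N) * (\<Sum>i<N. \<Sum>q<\<tau>. al q * (\<integral>\<omega>. xi i q \<omega> \<bullet> Bv \<omega> \<partial>M))"
    unfolding expand using int_dsum(2)[of "{..<N}" "{..<\<tau>}" "\<lambda>i q \<omega>. xi i q \<omega> \<bullet> Bv \<omega>" "\<lambda>i q. al q"] ih by simp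
  also have "\<dots> = (1 / real N) * (\<Sum>i<N. \<Sum>q<\<tau>. (1 / real N) * (al q * al q * (\<integral>\<omega>. xi i q \<omega> \<bullet> xi i q \<omega> \<partial>M)))"
    using hint by (simp add: algebra_simps)
  also have "\<dots> \<le> (1 / real N) * (\<Sum>i<N. \<Sum>q<\<tau>. (1 / real N) * (al q * SS * \<sigma>L\<^sup>2))"
  proof (intro mult_left_mono sum_mono)
    fix i q assume iq: "i \<in> {..<N}" "q \<in> {..<\<tau>}"
    have a: "(\<integral>\<omega>. xi i q \<omega> \<bullet> xi i q \<omega> \<partial>M) \<le> \<sigma>L\<^sup>2"
      using xi_sq_int_le[of i q] iq unfolding power2_norm_eq_inner by simp
    have b: "al q * al q \<le> al q * SS" using al_le_SS[of q] iq al_nonneg by (intro mult_left_mono) auto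
    have c: "0 \<le> (\<integral>\<omega>. xi i q \<omega> \<bullet> xi i q \<omega> \<partial>M)" by (intro integral_nonneg_AE) simp
    show "al q * al q * (\<integral>\<omega>. xi i q \<omega> \<bullet> xi i q \<omega> \<partial>M) \<le> al q * SS * \<sigma>L\<^sup>2"
      using a b c al_nonneg[of q] SS_pos al_le_SS[of q] iq by (intro mult_mono) auto
  qed simp_all
  also have "\<dots> = \<sigma>L\<^sup>2 * SS\<^sup>2 / real N"
  proof -
    have "(\<Sum>q<\<tau>. (1 / real N) * (al q * SS * \<sigma>L\<^sup>2)) = (1 / real N) * SS * SS * \<sigma>L\<^sup>2"
    proof -
      have "(\<Sum>q<\<tau>. (1 / real N) * (al q * SS * \<sigma>L\<^sup>2)) = (\<Sum>q<\<tau>. al q) * ((1 / real N) * SS * \<sigma>L\<^sup>2)"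
        unfolding sum_distrib_right by (intro sum.cong refl) (simp add: algebra_simps)
      then show ?thesis unfolding SS_sum by simp
    qed
    then show ?thesis using N_gt0 by (simp add: power2_eq_square field_simps)
  qed
  finally show "(\<integral>\<omega>. (norm (Bv \<omega>))\<^sup>2 \<partial>M) \<le> \<sigma>L\<^sup>2 * SS\<^sup>2 / real N" .
qed

lemma E_D:
  "integrable M Dsum"
  "(\<integral>\<omega>. Dsum \<omega> \<partial>M) \<le> real N * SS * Kb"
proof -
  have ii: "integrable M (\<lambda>\<omega>. (norm (th i q \<omega> - \<theta>0))\<^sup>2)" if "i < N" "q < \<tau>" for i q
    using int_thd that by simp
  show "integrable M Dsum"
    unfolding Dsum_def[abs_def] using int_dsum(1)[of "{..<N}" "{..<\<tau>}" "\<lambda>i q \<omega>. (norm (th i q \<omega> - \<theta>0))\<^sup>2" "\<lambda>i q. al q"] ii by simp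
  have "(\<integral>\<omega>. Dsum \<omega> \<partial>M) = (\<Sum>i<N. \<Sum>q<\<tau>. al q * (\<integral>\<omega>. (norm (th i q \<omega> - \<theta>0))\<^sup>2 \<partial>M))"
    unfolding Dsum_def using int_dsum(2)[of "{..<N}" "{..<\<tau>}" "\<lambda>i q \<omega>. (norm (th i q \<omega> - \<theta>0))\<^sup>2" "\<lambda>i q. al q"] ii by simp
  also have "\<dots> \<le> (\<Sum>i<N. \<Sum>q<\<tau>. al q * Kb)"
    using th_drift al_nonneg by (intro sum_mono mult_left_mono) auto
  also have "\<dots> = real N * SS * Kb" by (simp add: sum_distrib_right[symmetric] SS_sum)
  finally show "(\<integral>\<omega>. Dsum \<omega> \<partial>M) \<le> real N * SS * Kb" .
qed

end


context fed
begin

lemma u_eq: "thn \<omega> - \<theta>0 = (1 / real N) *\<^sub>R (\<Sum>i<N. th i \<tau> \<omega> - \<theta>0)"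
  unfolding thn_def by simp

lemma sqint_u: "sqint (\<lambda>\<omega>. thn \<omega> - \<theta>0)"
  unfolding u_eq using sqint_thd by (intro sqint_scale sqint_sum) auto

lemma thn_M: "thn \<in> borel_measurable M"
proof -
  have "(\<lambda>\<omega>. \<theta>0 + (thn \<omega> - \<theta>0)) \<in> borel_measurable M"
    using sqint_u unfolding sqint_def by (intro borel_measurable_add) auto
  then show ?thesis by simp
qed

lemma f_thn_int: "integrable M (\<lambda>\<omega>. f (thn \<omega>))"
proof -
  define u where "u \<omega> = thn \<omega> - \<theta>0" for \<omega>
  have su: "sqint u" unfolding u_def[abs_def] by (rule sqint_u)
  have mf: "(\<lambda>\<omega>. f (thn \<omega>)) \<in> borel_measurable M"
    using borel_measurable_continuous_on[OF L_smooth_cont[OF f_smooth] thn_M] .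
  have "integrable M (\<lambda>\<omega>. \<bar>f \<theta>0\<bar> + norm (gf \<theta>0) * norm (u \<omega>) + L / 2 * (norm (u \<omega>))\<^sup>2)"
  proof -
    have "integrable M (\<lambda>\<omega>. norm (u \<omega>))" using sqint_int[OF su] by (rule integrable_norm)
    moreover have "integrable M (\<lambda>\<omega>. (norm (u \<omega>))\<^sup>2)" using su unfolding sqint_def by blast
    ultimately show ?thesis by (intro Bochner_Integration.integrable_add integrable_mult_right int_c)
  qed
  moreover have "AE \<omega> in M. norm (f (thn \<omega>)) \<le> norm (\<bar>f \<theta>0\<bar> + norm (gf \<theta>0) * norm (u \<omega>) + L / 2 * (norm (u \<omega>))\<^sup>2)"
  proof (intro AE_I2)
    fix \<omega>
    have e: "thn \<omega> = \<theta>0 + u \<omega>" unfolding u_def by simp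
    have up: "f (thn \<omega>) \<le> f \<theta>0 + gf \<theta>0 \<bullet> u \<omega> + L / 2 * (norm (u \<omega>))\<^sup>2"
      unfolding e by (rule smooth_upper[OF f_smooth])
    have lo: "f (thn \<omega>) \<ge> f \<theta>0 + gf \<theta>0 \<bullet> u \<omega> - L / 2 * (norm (u \<omega>))\<^sup>2"
      unfolding e by (rule smooth_lower[OF f_smooth])
    have cs: "\<bar>gf \<theta>0 \<bullet> u \<omega>\<bar> \<le> norm (gf \<theta>0) * norm (u \<omega>)" by (rule Cauchy_Schwarz_ineq2)
    have nn: "0 \<le> L / 2 * (norm (u \<omega>))\<^sup>2" using L_pos by simp
    have "\<bar>f (thn \<omega>)\<bar> \<le> \<bar>f \<theta>0\<bar> + norm (gf \<theta>0) * norm (u \<omega>) + L / 2 * (norm (u \<omega>))\<^sup>2"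
      using up lo cs nn by linarith
    then show "norm (f (thn \<omega>)) \<le> norm (\<bar>f \<theta>0\<bar> + norm (gf \<theta>0) * norm (u \<omega>) + L / 2 * (norm (u \<omega>))\<^sup>2)"
      by simp
  qed
  ultimately show ?thesis using Bochner_Integration.integrable_bound mf by blast
qed

lemma int_cm: "integrable M h \<Longrightarrow> integrable M (\<lambda>\<omega>. k * h \<omega>)" for h :: "'w \<Rightarrow> real"
  by simp

lemma E_bound:
  "(\<integral>\<omega>. f (thn \<omega>) \<partial>M) \<le> f \<theta>0 - (\<eta> * SS / 2) * (real CARD('r) / real CARD('d) * (norm (gf \<theta>0))\<^sup>2)
      + \<eta> * L\<^sup>2 / real N * (real N * SS * Kb) + L * \<eta>\<^sup>2 * (\<sigma>L\<^sup>2 * SS\<^sup>2 / real N)"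
proof -
  define Qf where "Qf \<omega> = gf \<theta>0 \<bullet> (Pi \<omega> *v gf \<theta>0)" for \<omega>
  define Cr where "Cr \<omega> = (Pi \<omega> *v gf \<theta>0) \<bullet> Bv \<omega>" for \<omega>
  define Bn where "Bn \<omega> = (norm (Bv \<omega>))\<^sup>2" for \<omega>
  define a where "a = \<eta> * SS / 2"
  define b where "b = \<eta> * L\<^sup>2 / real N"
  define c where "c = L * \<eta>\<^sup>2 * SS - \<eta>"
  define e where "e = L * \<eta>\<^sup>2"
  have iQ: "integrable M Qf" unfolding Qf_def[abs_def] by (rule E_haar(1))
  have iC: "integrable M Cr" unfolding Cr_def[abs_def] by (rule E_cross(1))
  have iB: "integrable M Bn" unfolding Bn_def[abs_def] by (rule E_B(1))
  have iD: "integrable M Dsum" by (rule E_D(1))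
  have i1: "integrable M (\<lambda>\<omega>. f \<theta>0 - a * Qf \<omega>)" by (rule Bochner_Integration.integrable_diff[OF int_c int_cm[OF iQ]])
  have i2: "integrable M (\<lambda>\<omega>. f \<theta>0 - a * Qf \<omega> + b * Dsum \<omega>)" by (rule Bochner_Integration.integrable_add[OF i1 int_cm[OF iD]])
  have i3: "integrable M (\<lambda>\<omega>. f \<theta>0 - a * Qf \<omega> + b * Dsum \<omega> + c * Cr \<omega>)" by (rule Bochner_Integration.integrable_add[OF i2 int_cm[OF iC]])
  have i4: "integrable M (\<lambda>\<omega>. f \<theta>0 - a * Qf \<omega> + b * Dsum \<omega> + c * Cr \<omega> + e * Bn \<omega>)" by (rule Bochner_Integration.integrable_add[OF i3 int_cm[OF iB]])
  have "(\<integral>\<omega>. f (thn \<omega>) \<partial>M) \<le> (\<integral>\<omega>. f \<theta>0 - a * Qf \<omega> + b * Dsum \<omega> + c * Cr \<omega> + e * Bn \<omega> \<partial>M)"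
  proof (rule integral_mono_AE[OF f_thn_int i4])
    show "AE \<omega> in M. f (thn \<omega>) \<le> f \<theta>0 - a * Qf \<omega> + b * Dsum \<omega> + c * Cr \<omega> + e * Bn \<omega>"
      using pointwise_AE unfolding a_def b_def c_def e_def Qf_def Cr_def Bn_def by simp
  qed
  also have "(\<integral>\<omega>. f \<theta>0 - a * Qf \<omega> + b * Dsum \<omega> + c * Cr \<omega> + e * Bn \<omega> \<partial>M)
      = f \<theta>0 - a * (\<integral>\<omega>. Qf \<omega> \<partial>M) + b * (\<integral>\<omega>. Dsum \<omega> \<partial>M) + c * (\<integral>\<omega>. Cr \<omega> \<partial>M) + e * (\<integral>\<omega>. Bn \<omega> \<partial>M)"
  proof -
    have c1: "(\<integral>\<omega>. f \<theta>0 \<partial>M) = f \<theta>0" using prob_space.prob_space[OF M] by simp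
    have "(\<integral>\<omega>. f \<theta>0 - a * Qf \<omega> + b * Dsum \<omega> + c * Cr \<omega> + e * Bn \<omega> \<partial>M)
        = (\<integral>\<omega>. f \<theta>0 - a * Qf \<omega> + b * Dsum \<omega> + c * Cr \<omega> \<partial>M) + (\<integral>\<omega>. e * Bn \<omega> \<partial>M)"
      by (rule Bochner_Integration.integral_add[OF i3 int_cm[OF iB]])
    also have "(\<integral>\<omega>. f \<theta>0 - a * Qf \<omega> + b * Dsum \<omega> + c * Cr \<omega> \<partial>M)
        = (\<integral>\<omega>. f \<theta>0 - a * Qf \<omega> + b * Dsum \<omega> \<partial>M) + (\<integral>\<omega>. c * Cr \<omega> \<partial>M)"
      by (rule Bochner_Integration.integral_add[OF i2 int_cm[OF iC]])
    also have "(\<integral>\<omega>. f \<theta>0 - a * Qf \<omega> + b * Dsum \<omega> \<partial>M)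
        = (\<integral>\<omega>. f \<theta>0 - a * Qf \<omega> \<partial>M) + (\<integral>\<omega>. b * Dsum \<omega> \<partial>M)"
      by (rule Bochner_Integration.integral_add[OF i1 int_cm[OF iD]])
    also have "(\<integral>\<omega>. f \<theta>0 - a * Qf \<omega> \<partial>M) = (\<integral>\<omega>. f \<theta>0 \<partial>M) - (\<integral>\<omega>. a * Qf \<omega> \<partial>M)"
      by (rule Bochner_Integration.integral_diff[OF int_c int_cm[OF iQ]])
    finally show ?thesis unfolding c1 integral_mult_right_zero .
  qed
  also have "\<dots> \<le> f \<theta>0 - a * (real CARD('r) / real CARD('d) * (norm (gf \<theta>0))\<^sup>2) + b * (real N * SS * Kb) + c * 0 + e * (\<sigma>L\<^sup>2 * SS\<^sup>2 / real N)"
  proof -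
    have eQ: "(\<integral>\<omega>. Qf \<omega> \<partial>M) = real CARD('r) / real CARD('d) * (norm (gf \<theta>0))\<^sup>2" unfolding Qf_def by (rule E_haar(2))
    have eC: "(\<integral>\<omega>. Cr \<omega> \<partial>M) = 0" unfolding Cr_def by (rule E_cross(2))
    have "b * (\<integral>\<omega>. Dsum \<omega> \<partial>M) \<le> b * (real N * SS * Kb)"
      unfolding b_def using E_D(2) eta_pos N_gt0 by (intro mult_left_mono) auto
    moreover have "e * (\<integral>\<omega>. Bn \<omega> \<partial>M) \<le> e * (\<sigma>L\<^sup>2 * SS\<^sup>2 / real N)"
      unfolding e_def Bn_def using E_B(2) eta_pos L_pos by (intro mult_left_mono) auto
    ultimately show ?thesis unfolding eQ eC by linarith
  qed
  finally show ?thesis unfolding a_def b_def e_def by simp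
qed

end


lemma final_arith:
  fixes E f0 \<delta> \<eta> SS L N Kb \<sigma>L \<sigma>G G2 \<mu> t :: real
  assumes E: "E \<le> f0 - (\<eta> * SS / 2) * (\<delta> * G2) + \<eta> * L\<^sup>2 / N * (N * SS * Kb) + L * \<eta>\<^sup>2 * (\<sigma>L\<^sup>2 * SS\<^sup>2 / N)"
    and Kb: "Kb = 12 * \<eta>\<^sup>2 * t ^ 3 / (1 - \<mu>\<^sup>2) * (\<sigma>L\<^sup>2 + \<sigma>G\<^sup>2 + G2)"
    and N: "N > 0" and d: "0 < \<delta>" "\<delta> \<le> 1" and eta: "\<eta> > 0" and L: "L > 0"
    and mu: "0 \<le> \<mu>" "\<mu> < 1" and SSle: "SS \<le> t / (1 - \<mu>)" and SS: "SS > 0" and G2: "G2 \<ge> 0" and t: "t \<ge> 0"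
  shows "E \<le> f0 - (\<delta> / 2 * \<eta> * SS - 12 * L\<^sup>2 * t ^ 4 * \<eta> ^ 3 / ((1 - \<mu>) * (1 - \<mu>\<^sup>2))) * G2
              + \<eta>\<^sup>2 * SS\<^sup>2 * L * \<sigma>L\<^sup>2 / N
              + 12 * L\<^sup>2 * t ^ 4 * \<eta> ^ 3 / (\<delta> * (1 - \<mu>) * (1 - \<mu>\<^sup>2)) * (\<sigma>L\<^sup>2 + \<sigma>G\<^sup>2)"
proof -
  have m1: "1 - \<mu> > 0" using mu by simp
  have m2: "1 - \<mu>\<^sup>2 > 0"
  proof -
    have "\<mu> * \<mu> \<le> \<mu> * 1" using mu by (intro mult_left_mono) auto
    then show ?thesis using mu by (simp add: power2_eq_square)
  qed
  define C where "C = 12 * L\<^sup>2 * t ^ 4 * \<eta> ^ 3 / ((1 - \<mu>) * (1 - \<mu>\<^sup>2))"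
  define Cd where "Cd = 12 * L\<^sup>2 * t ^ 4 * \<eta> ^ 3 / (\<delta> * (1 - \<mu>) * (1 - \<mu>\<^sup>2))"
  define s2 where "s2 = \<sigma>L\<^sup>2 + \<sigma>G\<^sup>2"
  have s2: "s2 \<ge> 0" unfolding s2_def by simp
  have C0: "C \<ge> 0" unfolding C_def using m1 m2 eta L t by simp
  have CCd: "C \<le> Cd"
  proof -
    have "Cd = C / \<delta>" unfolding C_def Cd_def using d by (simp add: field_simps)
    moreover have "C \<le> C / \<delta>" using C0 d by (simp add: le_divide_eq mult_left_le)
    ultimately show ?thesis by simp
  qed
  define k where "k = \<eta> * L\<^sup>2 * 12 * \<eta>\<^sup>2 * t ^ 3 / (1 - \<mu>\<^sup>2)"
  have k0: "k \<ge> 0" unfolding k_def using m2 eta t by simp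
  have A1: "\<eta> * L\<^sup>2 / N * (N * SS * Kb) = (k * SS) * (s2 + G2)"
    unfolding Kb k_def s2_def using N m2 by (simp add: field_simps)
  have A2: "k * SS \<le> C"
  proof -
    have "k * SS \<le> k * (t / (1 - \<mu>))" using SSle k0 by (intro mult_left_mono) auto
    also have "\<dots> = C"
    proof -
      have t4: "t ^ 4 = t * t ^ 3" and e3: "\<eta> ^ 3 = \<eta> * \<eta>\<^sup>2" by (simp_all add: eval_nat_numeral)
      show ?thesis unfolding k_def C_def t4 e3 using m1 m2 by (simp add: field_simps)
    qed
    finally show ?thesis .
  qed
  have A3: "(k * SS) * (s2 + G2) \<le> C * s2 + C * G2"
  proof -
    have "(k * SS) * (s2 + G2) \<le> C * (s2 + G2)" using A2 s2 G2 by (intro mult_right_mono) auto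
    then show ?thesis by (simp add: algebra_simps)
  qed
  have A4: "C * s2 \<le> Cd * s2" using CCd s2 by (intro mult_right_mono) auto
  have A5: "L * \<eta>\<^sup>2 * (\<sigma>L\<^sup>2 * SS\<^sup>2 / N) = \<eta>\<^sup>2 * SS\<^sup>2 * L * \<sigma>L\<^sup>2 / N" by (simp add: algebra_simps)
  have A6: "(\<eta> * SS / 2) * (\<delta> * G2) = \<delta> / 2 * \<eta> * SS * G2" by (simp add: algebra_simps)
  have A7: "f0 - (\<delta> / 2 * \<eta> * SS - C) * G2 = f0 - \<delta> / 2 * \<eta> * SS * G2 + C * G2" by (simp add: algebra_simps)
  have "E \<le> f0 - \<delta> / 2 * \<eta> * SS * G2 + C * G2 + \<eta>\<^sup>2 * SS\<^sup>2 * L * \<sigma>L\<^sup>2 / N + Cd * s2"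
    using E A1 A3 A4 A5 A6 by linarith
  then show ?thesis unfolding C_def[symmetric] Cd_def[symmetric] s2_def[symmetric] A7 by simp
qed

context fed
begin

theorem main:
  shows "let \<delta> = real CARD('r) / real CARD('d);
             S = S_tau \<mu> \<tau>;
             \<theta>next = (\<lambda>\<omega>. \<theta>0 + (1 / real N) *\<^sub>R (\<Sum>i<N.
                 fst (local_iter \<eta> \<mu> (P \<omega> ** transpose (P \<omega>)) (\<lambda>s. g i s \<omega>) \<theta>0 \<tau>) - \<theta>0))
         in integrable M (\<lambda>\<omega>. f (\<theta>next \<omega>)) \<and>
            (\<integral>\<omega>. f (\<theta>next \<omega>) \<partial>M) \<le> f \<theta>0
              - (\<delta> / 2 * \<eta> * S - 12 * L\<^sup>2 * real \<tau> ^ 4 * \<eta> ^ 3 / ((1 - \<mu>) * (1 - \<mu>\<^sup>2)))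
                  * (norm (gf \<theta>0))\<^sup>2
              + \<eta>\<^sup>2 * S\<^sup>2 * L * \<sigma>L\<^sup>2 / real N
              + 12 * L\<^sup>2 * real \<tau> ^ 4 * \<eta> ^ 3 / (\<delta> * (1 - \<mu>) * (1 - \<mu>\<^sup>2)) * (\<sigma>L\<^sup>2 + \<sigma>G\<^sup>2)"
proof -
  have eqn: "(\<lambda>\<omega>. \<theta>0 + (1 / real N) *\<^sub>R (\<Sum>i<N.
                 fst (local_iter \<eta> \<mu> (P \<omega> ** transpose (P \<omega>)) (\<lambda>s. g i s \<omega>) \<theta>0 \<tau>) - \<theta>0)) = thn"
    unfolding thn_def th_def Pi_def ..
  have d: "0 < real CARD('r) / real CARD('d)" by simp
  have d1: "real CARD('r) / real CARD('d) \<le> 1" using r_le_d by simp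
  have SSle: "SS \<le> real \<tau> / (1 - \<mu>)" unfolding SS_def by (rule S_tau_le[OF mu])
  have "(\<integral>\<omega>. f (thn \<omega>) \<partial>M) \<le> f \<theta>0
              - (real CARD('r) / real CARD('d) / 2 * \<eta> * SS - 12 * L\<^sup>2 * real \<tau> ^ 4 * \<eta> ^ 3 / ((1 - \<mu>) * (1 - \<mu>\<^sup>2)))
                  * (norm (gf \<theta>0))\<^sup>2
              + \<eta>\<^sup>2 * SS\<^sup>2 * L * \<sigma>L\<^sup>2 / real N
              + 12 * L\<^sup>2 * real \<tau> ^ 4 * \<eta> ^ 3 / (real CARD('r) / real CARD('d) * (1 - \<mu>) * (1 - \<mu>\<^sup>2)) * (\<sigma>L\<^sup>2 + \<sigma>G\<^sup>2)"
    by (rule final_arith[OF E_bound Kb_def N_gt0 d d1 eta_pos L_pos mu SSle SS_pos]) auto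
  then show ?thesis unfolding Let_def eqn SS_def[symmetric] using f_thn_int by simp
qed

end


theorem lemma4:
  fixes M :: "'w measure"
    and P :: "'w \<Rightarrow> real^'r^'d"
    and g :: "nat \<Rightarrow> nat \<Rightarrow> 'w \<Rightarrow> real^'d"
    and F :: "nat \<Rightarrow> real^'d \<Rightarrow> real" and gF :: "nat \<Rightarrow> real^'d \<Rightarrow> real^'d"
    and f :: "real^'d \<Rightarrow> real" and gf :: "real^'d \<Rightarrow> real^'d"
    and N \<tau> :: nat and \<mu> \<eta> L \<sigma>L \<sigma>G :: real and \<theta>0 :: "real^'d"
  defines "f \<equiv> (\<lambda>\<theta>. (1 / real N) * (\<Sum>i<N. F i \<theta>))"
    and "gf \<equiv> (\<lambda>\<theta>. (1 / real N) *\<^sub>R (\<Sum>i<N. gF i \<theta>))"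
  assumes N_pos: "N \<ge> 1" and tau_pos: "\<tau> \<ge> 1"
    and r_le_d: "CARD('r) \<le> CARD('d)"
    and mu: "0 \<le> \<mu>" "\<mu> < 1" and eta_pos: "\<eta> > 0" and L_pos: "L > 0"
    \<comment> \<open>A1\<close>
    and bdd_below: "\<exists>fstar. \<forall>\<theta>. f \<theta> \<ge> fstar"
    and f_smooth: "L_smooth L f gf"
    and F_smooth: "\<forall>i<N. L_smooth L (F i) (gF i)"
    \<comment> \<open>round-t randomness: probability space, Haar projection, stochastic gradients\<close>
    and M: "prob_space M"
    and P_meas: "P \<in> borel_measurable M"
    and P_haar: "haar_stiefel (distr M borel P)"
    and g_meas: "\<forall>i<N. \<forall>s<\<tau>. g i s \<in> borel_measurable M"
    \<comment> \<open>A2: conditional unbiasedness and bounded conditional variance\<close>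
    and unbiased: "\<forall>i<N. \<forall>s<\<tau>. integrable M (g i s) \<and>
        (\<forall>A \<in> sets (info_sigma M P g N \<tau> i s).
           (\<integral>\<omega>. indicator A \<omega> *\<^sub>R g i s \<omega> \<partial>M) =
           (\<integral>\<omega>. indicator A \<omega> *\<^sub>R
               gF i (fst (local_iter \<eta> \<mu> (P \<omega> ** transpose (P \<omega>)) (\<lambda>s'. g i s' \<omega>) \<theta>0 s)) \<partial>M))"
    and var_bound: "\<forall>i<N. \<forall>s<\<tau>.
        integrable M (\<lambda>\<omega>. (norm (g i s \<omega> -
           gF i (fst (local_iter \<eta> \<mu> (P \<omega> ** transpose (P \<omega>)) (\<lambda>s'. g i s' \<omega>) \<theta>0 s))))\<^sup>2) \<and>
        (\<forall>A \<in> sets (info_sigma M P g N \<tau> i s).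
           (\<integral>\<omega>. indicator A \<omega> * (norm (g i s \<omega> -
              gF i (fst (local_iter \<eta> \<mu> (P \<omega> ** transpose (P \<omega>)) (\<lambda>s'. g i s' \<omega>) \<theta>0 s))))\<^sup>2 \<partial>M)
           \<le> \<sigma>L\<^sup>2 * measure M A)"
    and heterogeneity: "\<forall>i<N. \<forall>\<theta>. (norm (gF i \<theta> - gf \<theta>))\<^sup>2 \<le> \<sigma>G\<^sup>2"
    \<comment> \<open>step size\<close>
    and eta1: "\<eta> \<le> sqrt ((1 - \<mu>\<^sup>2) / (6 * L\<^sup>2 * real \<tau> ^ 3))"
    and eta2: "\<eta> \<le> 1 / (L * S_tau \<mu> \<tau>)"
  shows "let \<delta> = real CARD('r) / real CARD('d);
             S = S_tau \<mu> \<tau>;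
             \<theta>next = (\<lambda>\<omega>. \<theta>0 + (1 / real N) *\<^sub>R (\<Sum>i<N.
                 fst (local_iter \<eta> \<mu> (P \<omega> ** transpose (P \<omega>)) (\<lambda>s. g i s \<omega>) \<theta>0 \<tau>) - \<theta>0))
         in integrable M (\<lambda>\<omega>. f (\<theta>next \<omega>)) \<and>
            (\<integral>\<omega>. f (\<theta>next \<omega>) \<partial>M) \<le> f \<theta>0
              - (\<delta> / 2 * \<eta> * S - 12 * L\<^sup>2 * real \<tau> ^ 4 * \<eta> ^ 3 / ((1 - \<mu>) * (1 - \<mu>\<^sup>2)))
                  * (norm (gf \<theta>0))\<^sup>2
              + \<eta>\<^sup>2 * S\<^sup>2 * L * \<sigma>L\<^sup>2 / real N
              + 12 * L\<^sup>2 * real \<tau> ^ 4 * \<eta> ^ 3 / (\<delta> * (1 - \<mu>) * (1 - \<mu>\<^sup>2)) * (\<sigma>L\<^sup>2 + \<sigma>G\<^sup>2)"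
proof -
  interpret fed M P g F gF f gf N \<tau> \<mu> \<eta> L \<sigma>L \<sigma>G \<theta>0
  proof (rule fed.intro)
    show "gf = (\<lambda>\<theta>. (1 / real N) *\<^sub>R (\<Sum>i<N. gF i \<theta>))" using gf_def by simp
  qed (fact N_pos tau_pos r_le_d mu eta_pos L_pos f_smooth F_smooth M P_meas P_haar g_meas unbiased
         var_bound heterogeneity eta1 eta2)+
  show ?thesis by (rule main)
qed

end
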